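(* Let $v$, $v_1$, $v_2$ be $0$-, $1$-, $2$-equivariant functions respectively (in the relevant spaces below). Near the origin: $\|\mathbf{1}_{(0,1]}v\|_{L^\infty}\lesssim\|v\|_{\dot{\mathcal{H}}^3_0}$, $\|\mathbf{1}_{(0,1]}v_1\|_{L^\infty}\lesssim\|v_1\|_{\dot{\mathcal{H}}^2_1}$, $\|\mathbf{1}_{(0,1]}v_2\|_{L^\infty}\lesssim\|v_2\|_{\dot{\mathcal{H}}^1_2}$. Near infinity: $\|\mathbf{1}_{[1,\infty)}v\|_{L^\infty}\lesssim\|v\|_{\dot{\mathcal{H}}^1_0}$, $\|\mathbf{1}_{[1,\infty)}\langle\log_+r\rangle^{-1}|v|_{-2}\|_{L^\infty}\lesssim\|v\|_{\dot{\mathcal{H}}^3_0}$, $\|\mathbf{1}_{[1,\infty)}v_1\|_{L^\infty}\lesssim\|v_1\|_{L^2}^{1/2}\|v_1\|_{\dot{\mathcal{H}}^2_1}^{1/2}$, $\|\mathbf{1}_{[1,\infty)}\langle\log_+r\rangle^{-1}|v_1|_{-1}\|_{L^\infty}\lesssim\|v_1\|_{\dot{\mathcal{H}}^2_1}$, $\|\mathbf{1}_{[1,\infty)}\langle\log_+r\rangle^{-1}v_2\|_{L^\infty}\lesssim\|v_2\|_{\dot{\mathcal{H}}^1_2}$.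
   Context: Equivariant functions on $\mathbb{R}^2$ are identified with radial profiles on $(0,\infty)$; $L^2$ is $L^2(\mathbb{R}^2)$. $\langle a\rangle=(1+a^2)^{1/2}$, $\log_\pm$ is $\max\{0,\pm\log\}$. For $f$ and $k\ge0$: $|f|_{-k}(r)=\sup_{0\le\ell\le k}|r^{-\ell}\partial_r^{k-\ell}f(r)|$. Adapted spaces are completions of $m$-equivariant Schwartz functions under: $\|v\|_{\dot{\mathcal{H}}^1_0}=\|\partial_rv\|_{L^2}+\|r^{-1}\langle\log_-r\rangle^{-1}v\|_{L^2}$; $\|v\|_{\dot{\mathcal{H}}^1_2}=\|\partial_rv\|_{L^2}+\|r^{-1}\langle\log_+r\rangle^{-1}v\|_{L^2}$; $\|v\|_{\dot{\mathcal{H}}^2_1}=\|\partial_{rr}v\|_{L^2}+\|r^{-1}\langle\log r\rangle^{-1}|v|_{-1}\|_{L^2}$; $\|v\|_{\dot{\mathcal{H}}^3_0}=\|\partial_{rrr}v\|_{L^2}+\|r^{-1}\langle\log r\rangle^{-1}|\partial_rv|_{-1}\|_{L^2}+\|r^{-1}\langle r\rangle^{-2}\langle\log r\rangle^{-1}v\|_{L^2}$. *)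

theory Defs
  imports "HOL-Analysis.Analysis"
begin

text \<open>R^2 is identified with the complex plane; functions on R^2 are complex-valued.\<close>

definition pdir :: "complex \<Rightarrow> (complex \<Rightarrow> complex) \<Rightarrow> complex \<Rightarrow> complex" where
  "pdir e f x = frechet_derivative f (at x) e"

fun iter_pd :: "complex list \<Rightarrow> (complex \<Rightarrow> complex) \<Rightarrow> complex \<Rightarrow> complex" where
  "iter_pd [] f = f"
| "iter_pd (e # es) f = pdir e (iter_pd es f)"

definition schwartz :: "(complex \<Rightarrow> complex) \<Rightarrow> bool" where
  "schwartz u \<longleftrightarrow> (\<forall>ds. set ds \<subseteq> {1, \<i>} \<longrightarrow>
      (\<forall>x. iter_pd ds u differentiable (at x)) \<and>
      (\<forall>n::nat. \<exists>B. \<forall>x. norm x ^ n * norm (iter_pd ds u x) \<le> B))"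

definition equivariant :: "int \<Rightarrow> (complex \<Rightarrow> complex) \<Rightarrow> bool" where
  "equivariant m u \<longleftrightarrow> (\<forall>\<theta> z. u (cis \<theta> * z) = cis (of_int m * \<theta>) * u z)"

definition profile :: "(complex \<Rightarrow> complex) \<Rightarrow> real \<Rightarrow> complex" where
  "profile u r = u (complex_of_real r)"

definition jb :: "real \<Rightarrow> real" where "jb a = sqrt (1 + a\<^sup>2)"
definition logp :: "real \<Rightarrow> real" where "logp r = max 0 (ln r)"
definition logm :: "real \<Rightarrow> real" where "logm r = max 0 (- ln r)"

definition dr :: "(real \<Rightarrow> complex) \<Rightarrow> real \<Rightarrow> complex" where
  "dr f r = vector_derivative f (at r)"

abbreviation drk :: "nat \<Rightarrow> (real \<Rightarrow> complex) \<Rightarrow> real \<Rightarrow> complex" where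
  "drk k f \<equiv> (dr ^^ k) f"

text \<open>|f|_{-k}(r) = sup_{0<=l<=k} |r^{-l} d_r^{k-l} f(r)|\<close>
definition wk :: "nat \<Rightarrow> (real \<Rightarrow> complex) \<Rightarrow> real \<Rightarrow> real" where
  "wk k f r = Max ((\<lambda>l. norm (drk (k - l) f r) / r ^ l) ` {0..k})"

definition ennsqrt :: "ennreal \<Rightarrow> ennreal" where
  "ennsqrt x = (if x = top then top else ennreal (sqrt (enn2real x)))"

text \<open>L^2(R^2) norm of a radial profile (possibly infinite).\<close>
definition L2 :: "(real \<Rightarrow> 'a::real_normed_vector) \<Rightarrow> ennreal" where
  "L2 f = ennsqrt (\<integral>\<^sup>+ r. ennreal (2 * pi * r * (norm (f r))\<^sup>2) * indicator {0<..} r \<partial>lborel)"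

definition H10 :: "(real \<Rightarrow> complex) \<Rightarrow> ennreal" where
  "H10 v = L2 (dr v) + L2 (\<lambda>r. v r / complex_of_real (r * jb (logm r)))"

definition H12 :: "(real \<Rightarrow> complex) \<Rightarrow> ennreal" where
  "H12 v = L2 (dr v) + L2 (\<lambda>r. v r / complex_of_real (r * jb (logp r)))"

definition H21 :: "(real \<Rightarrow> complex) \<Rightarrow> ennreal" where
  "H21 v = L2 (drk 2 v) + L2 (\<lambda>r. wk 1 v r / (r * jb (ln r)))"

definition H30 :: "(real \<Rightarrow> complex) \<Rightarrow> ennreal" where
  "H30 v = L2 (drk 3 v) + L2 (\<lambda>r. wk 1 (dr v) r / (r * jb (ln r)))
         + L2 (\<lambda>r. v r / complex_of_real (r * (jb r)\<^sup>2 * jb (ln r)))"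

text \<open>sup norm of f restricted to a set S (f continuous on (0,inf) in our use)\<close>
definition Linf :: "real set \<Rightarrow> (real \<Rightarrow> real) \<Rightarrow> ennreal" where
  "Linf S f = (SUP r\<in>S. ennreal \<bar>f r\<bar>)"

end

theory Submission
  imports Defs
begin


lemma ftc_nn:
  fixes f :: "real \<Rightarrow> 'a::banach"
  assumes ab: "a \<le> b"
    and d: "\<And>x. x \<in> {a..b} \<Longrightarrow> (f has_vector_derivative f' x) (at x)"
    and c: "continuous_on {a..b} f'"
  shows "ennreal (norm (f b - f a)) \<le> (\<integral>\<^sup>+x. ennreal (norm (f' x)) * indicator {a..b} x \<partial>lborel)"
proof -
  have I: "(f' has_integral (f b - f a)) {a..b}"
    using ab d by (intro fundamental_theorem_of_calculus) (auto intro: has_vector_derivative_at_within)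
  have cn: "continuous_on {a..b} (\<lambda>x. norm (f' x))" using c by (intro continuous_intros)
  have int2: "(\<lambda>x. norm (f' x)) integrable_on {a..b}"
    using cn integrable_continuous_interval by blast
  have "norm (f b - f a) \<le> integral {a..b} (\<lambda>x. norm (f' x))"
    using integral_norm_bound_integral[of f' "{a..b}" "\<lambda>x. norm (f' x)"] I int2
    by (metis has_integral_integrable_integral order_refl)
  moreover have "(\<integral>\<^sup>+x. ennreal (norm (f' x)) * indicator {a..b} x \<partial>lborel) = ennreal (integral {a..b} (\<lambda>x. norm (f' x)))"
    by (rule nn_integral_has_integral_lebesgue') (use int2 in auto)
  ultimately show ?thesis by (simp add: ennreal_leI)
qed

lemma tail_nn:
  fixes f :: "real \<Rightarrow> 'a::banach"
  assumes d: "\<And>x. x \<ge> a \<Longrightarrow> (f has_vector_derivative f' x) (at x)"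
    and c: "continuous_on {a..} f'"
    and lim: "(f \<longlongrightarrow> 0) at_top"
  shows "ennreal (norm (f a)) \<le> (\<integral>\<^sup>+x. ennreal (norm (f' x)) * indicator {a..} x \<partial>lborel)"
    (is "_ \<le> ?X")
proof (rule ennreal_le_epsilon)
  fix e :: real assume e: "0 < e"
  have "\<forall>\<^sub>F R in at_top. norm (f R) < e"
    using tendsto_iff[THEN iffD1, OF lim] e by (simp add: dist_norm)
  then obtain R0 where R0: "\<And>R. R \<ge> R0 \<Longrightarrow> norm (f R) < e"
    by (auto simp: eventually_at_top_linorder)
  define R where "R = max R0 a"
  have R: "norm (f R) < e" "R \<ge> a" using R0[of R] by (auto simp: R_def)
  have "ennreal (norm (f R - f a)) \<le> (\<integral>\<^sup>+x. ennreal (norm (f' x)) * indicator {a..R} x \<partial>lborel)"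
    using R by (intro ftc_nn) (auto intro: d continuous_on_subset[OF c])
  also have "\<dots> \<le> ?X"
    by (intro nn_integral_mono) (auto simp: indicator_def)
  finally have 1: "ennreal (norm (f R - f a)) \<le> ?X" .
  have "norm (f a) \<le> norm (f R - f a) + norm (f R)"
    by (metis norm_minus_commute norm_triangle_sub add.commute)
  hence "ennreal (norm (f a)) \<le> ennreal (norm (f R - f a)) + ennreal e"
  proof -
    have "norm (f a) \<le> norm (f R - f a) + e" using R \<open>norm (f a) \<le> _\<close> by linarith
    hence "ennreal (norm (f a)) \<le> ennreal (norm (f R - f a) + e)" by (rule ennreal_leI)
    thus ?thesis using e by (simp add: ennreal_plus)
  qed
  also have "\<dots> \<le> ?X + ennreal e" using 1 by (rule add_right_mono)
  finally show "ennreal (norm (f a)) \<le> ?X + ennreal e" .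
qed

lemma csw:
  fixes g W :: "real \<Rightarrow> real"
  assumes [measurable]: "g \<in> borel_measurable borel" "W \<in> borel_measurable borel" "S \<in> sets borel"
    and W: "\<And>x. x \<in> S \<Longrightarrow> W x > 0" and g: "\<And>x. g x \<ge> 0"
  shows "(\<integral>\<^sup>+x. ennreal (g x) * indicator S x \<partial>lborel)^2 \<le>
     (\<integral>\<^sup>+x. ennreal (W x) * indicator S x \<partial>lborel) * (\<integral>\<^sup>+x. ennreal (g x ^ 2 / W x) * indicator S x \<partial>lborel)"
proof -
  define F where "F x = ennreal (sqrt (W x)) * indicator S x" for x
  define G where "G x = ennreal (g x / sqrt (W x)) * indicator S x" for x
  have [measurable]: "F \<in> borel_measurable lborel" "G \<in> borel_measurable lborel"
    unfolding F_def G_def by measurable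
  have 1: "(\<integral>\<^sup>+x. ennreal (g x) * indicator S x \<partial>lborel) = (\<integral>\<^sup>+x. F x * G x \<partial>lborel)"
  proof (rule nn_integral_cong)
    fix x show "ennreal (g x) * indicator S x = F x * G x"
      using W[of x] g[of x] by (cases "x \<in> S") (auto simp: F_def G_def indicator_def ennreal_mult' [symmetric] real_sqrt_gt_zero)
  qed
  have 2: "(\<integral>\<^sup>+x. F x ^ 2 \<partial>lborel) = (\<integral>\<^sup>+x. ennreal (W x) * indicator S x \<partial>lborel)"
  proof (rule nn_integral_cong)
    fix x show "F x ^ 2 = ennreal (W x) * indicator S x"
      using W[of x] by (cases "x \<in> S") (auto simp: F_def indicator_def ennreal_power less_imp_le)
  qed
  have 3: "(\<integral>\<^sup>+x. G x ^ 2 \<partial>lborel) = (\<integral>\<^sup>+x. ennreal (g x ^ 2 / W x) * indicator S x \<partial>lborel)"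
  proof (rule nn_integral_cong)
    fix x show "G x ^ 2 = ennreal (g x ^ 2 / W x) * indicator S x"
      using W[of x] g[of x] by (cases "x \<in> S") (auto simp: G_def indicator_def ennreal_power power_divide less_imp_le)
  qed
  show ?thesis using Cauchy_Schwarz_nn_integral[of F lborel G] 1 2 3 by simp
qed


lemma wk1_eq: "wk 1 f r = max (norm (dr f r)) (norm (f r) / r)"
  by (simp add: wk_def atLeast0AtMost atMost_Suc max.commute)

lemma wk2_eq: "wk 2 f r = max (norm (drk 2 f r)) (max (norm (dr f r) / r) (norm (f r) / r^2))"
  by (simp add: wk_def atLeast0AtMost atMost_Suc numeral_2_eq_2 max_def)

lemma profile_deriv:
  assumes "g differentiable (at (complex_of_real x))"
  shows "((profile g) has_vector_derivative profile (pdir 1 g) x) (at x)"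
proof -
  let ?D = "frechet_derivative g (at (complex_of_real x))"
  have D: "(g has_derivative ?D) (at (complex_of_real x))"
    using assms frechet_derivative_works by blast
  have lin: "linear ?D" using has_derivative_linear[OF D] .
  have O: "((\<lambda>r. complex_of_real r) has_derivative (\<lambda>h. complex_of_real h)) (at x)"
    by (rule bounded_linear_imp_has_derivative) (rule bounded_linear_of_real)
  have C: "((\<lambda>r. g (complex_of_real r)) has_derivative (\<lambda>h. ?D (complex_of_real h))) (at x)"
    using has_derivative_compose[OF O D] by simp
  have "(\<lambda>h. ?D (complex_of_real h)) = (\<lambda>h. h *\<^sub>R ?D 1)"
  proof
    fix h :: real
    have "complex_of_real h = h *\<^sub>R 1" by (simp add: scaleR_conv_of_real)
    thus "?D (complex_of_real h) = h *\<^sub>R ?D 1" using linear_scale[OF lin] by simp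
  qed
  moreover have "profile g = (\<lambda>r. g (complex_of_real r))" by (rule ext) (simp add: profile_def)
  ultimately show ?thesis using C
    by (simp add: has_vector_derivative_def profile_def pdir_def)
qed

lemma schwartz_diff:
  assumes "schwartz u" "set ds \<subseteq> {1, \<i>}"
  shows "iter_pd ds u differentiable (at x)"
  using assms unfolding schwartz_def by blast

lemma drk_profile:
  assumes "schwartz u"
  shows "drk k (profile u) = profile (iter_pd (replicate k 1) u)"
proof (induction k)
  case 0 then show ?case by simp
next
  case (Suc k)
  have "drk (Suc k) (profile u) = dr (profile (iter_pd (replicate k 1) u))"
    using Suc by simp
  also have "\<dots> = profile (iter_pd (replicate (Suc k) 1) u)"
  proof
    fix x
    have "iter_pd (replicate k 1) u differentiable (at (complex_of_real x))"
      using assms by (intro schwartz_diff) auto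
    from profile_deriv[OF this] show "dr (profile (iter_pd (replicate k 1) u)) x = profile (iter_pd (replicate (Suc k) 1) u) x"
      unfolding dr_def by (simp add: vector_derivative_at)
  qed
  finally show ?case .
qed

lemma drk_deriv:
  assumes "schwartz u"
  shows "(drk k (profile u) has_vector_derivative drk (Suc k) (profile u) x) (at x)"
proof -
  have "iter_pd (replicate k 1) u differentiable (at (complex_of_real x))"
    using assms by (intro schwartz_diff) auto
  from profile_deriv[OF this] have "(profile (iter_pd (replicate k 1) u) has_vector_derivative
     profile (iter_pd (replicate (Suc k) 1) u) x) (at x)" by simp
  thus ?thesis unfolding drk_profile[OF assms, of k] drk_profile[OF assms, of "Suc k"] .
qed

lemma drk_cont:
  assumes "schwartz u"
  shows "continuous_on A (drk k (profile u))"
  by (rule continuous_at_imp_continuous_on)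
     (use drk_deriv[OF assms] has_vector_derivative_continuous in blast)

lemma drk_meas [measurable]:
  assumes "schwartz u"
  shows "drk k (profile u) \<in> borel_measurable borel"
  by (rule borel_measurable_continuous_onI) (rule drk_cont[OF assms])

lemma drk_lim:
  assumes "schwartz u"
  shows "(drk k (profile u) \<longlongrightarrow> 0) at_top"
proof -
  obtain B where B: "\<And>x. norm x ^ 1 * norm (iter_pd (replicate k 1) u x) \<le> B"
  proof -
    have "set (replicate k (1::complex)) \<subseteq> {1, \<i>}" by auto
    with assms have "\<forall>n::nat. \<exists>B. \<forall>x. norm x ^ n * norm (iter_pd (replicate k 1) u x) \<le> B"
      unfolding schwartz_def by blast
    then obtain B where "\<forall>x. norm x ^ 1 * norm (iter_pd (replicate k 1) u x) \<le> B" by blast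
    thus ?thesis using that by blast
  qed
  have ev: "\<forall>\<^sub>F r in at_top. norm (drk k (profile u) r) \<le> B / r"
    using eventually_gt_at_top[of 0]
  proof eventually_elim
    case (elim r)
    have "r * norm (drk k (profile u) r) \<le> B"
      using B[of "complex_of_real r"] elim by (simp add: drk_profile[OF assms] profile_def)
    thus ?case using elim by (simp add: field_simps mult.commute)
  qed
  have "((\<lambda>r. B / r) \<longlongrightarrow> 0) at_top"
    by (intro tendsto_divide_0[OF tendsto_const] filterlim_at_top_imp_at_infinity filterlim_ident)
  with ev show ?thesis by (rule Lim_null_comparison)
qed

lemma equiv_zero:
  assumes "equivariant m u" "cis (of_int m * \<theta>) = -1"
  shows "u 0 = 0"
proof -
  have "u (cis \<theta> * 0) = cis (of_int m * \<theta>) * u 0" using assms(1) unfolding equivariant_def by blast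
  thus ?thesis using assms(2) by simp
qed

lemma equiv1_zero: "equivariant 1 u \<Longrightarrow> u 0 = 0"
  by (rule equiv_zero[of 1 u pi]) (simp_all add: complex_eq_iff)

lemma equiv2_zero: "equivariant 2 u \<Longrightarrow> u 0 = 0"
  by (rule equiv_zero[of 2 u "pi/2"]) (simp_all add: complex_eq_iff)


lemma dom_nn:
  fixes \<phi> \<psi> :: "real \<Rightarrow> real"
  assumes [measurable]: "\<phi> \<in> borel_measurable borel" "S \<in> sets borel"
    and S: "S \<subseteq> {0<..}" and c: "c > 0" and le: "\<And>x. x \<in> S \<Longrightarrow> \<phi> x \<le> c * \<psi> x"
  shows "(\<integral>\<^sup>+x. ennreal (\<phi> x) * indicator S x \<partial>lborel) \<le> ennreal c * (\<integral>\<^sup>+x. ennreal (\<psi> x) * indicator {0<..} x \<partial>lborel)"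
proof -
  have "(\<integral>\<^sup>+x. ennreal (\<phi> x) * indicator S x \<partial>lborel) = (\<integral>\<^sup>+x. ennreal c * (ennreal (\<phi> x / c) * indicator S x) \<partial>lborel)"
  proof (rule nn_integral_cong)
    fix x
    show "ennreal (\<phi> x) * indicator S x = ennreal c * (ennreal (\<phi> x / c) * indicator S x)"
    proof (cases "\<phi> x \<ge> 0")
      case True
      then show ?thesis using c by (simp add: ennreal_mult'[symmetric] mult.assoc[symmetric])
    next
      case False
      then have "\<phi> x / c \<le> 0" using c by (simp add: divide_nonpos_pos)
      then show ?thesis using False by (simp add: ennreal_neg)
    qed
  qed
  also have "\<dots> = ennreal c * (\<integral>\<^sup>+x. ennreal (\<phi> x / c) * indicator S x \<partial>lborel)"
    by (rule nn_integral_cmult) measurable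
  also have "\<dots> \<le> ennreal c * (\<integral>\<^sup>+x. ennreal (\<psi> x) * indicator {0<..} x \<partial>lborel)"
  proof (intro mult_left_mono nn_integral_mono)
    fix x
    show "ennreal (\<phi> x / c) * indicator S x \<le> ennreal (\<psi> x) * indicator {0<..} x"
    proof (cases "x \<in> S")
      case True
      then have "\<phi> x / c \<le> \<psi> x" using le[of x] c by (simp add: divide_le_eq mult.commute)
      then show ?thesis using True S by (auto simp: indicator_def intro: ennreal_leI)
    qed simp
  qed simp
  finally show ?thesis .
qed

lemma const_int:
  fixes W :: "real \<Rightarrow> real"
  assumes "a \<le> b" "K \<ge> 0" "\<And>x. x \<in> {a..b} \<Longrightarrow> W x \<le> K"
  shows "(\<integral>\<^sup>+x. ennreal (W x) * indicator {a..b} x \<partial>lborel) \<le> ennreal (K * (b - a))"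
proof -
  have "(\<integral>\<^sup>+x. ennreal (W x) * indicator {a..b} x \<partial>lborel) \<le> (\<integral>\<^sup>+x. ennreal K * indicator {a..b} x \<partial>lborel)"
    by (intro nn_integral_mono) (auto simp: indicator_def intro!: ennreal_leI assms(3))
  also have "\<dots> = ennreal K * ennreal (b - a)"
    using assms by (simp add: nn_integral_cmult_indicator)
  also have "\<dots> = ennreal (K * (b - a))" using assms by (simp add: ennreal_mult)
  finally show ?thesis .
qed

lemma inv_int:
  assumes "0 < a" "a \<le> b"
  shows "(\<integral>\<^sup>+x. ennreal (1 / x) * indicator {a..b} x \<partial>lborel) = ennreal (ln b - ln a)"
proof -
  have "((\<lambda>x. 1 / x) has_integral (ln b - ln a)) {a..b}"
    using assms
    by (intro fundamental_theorem_of_calculus)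
       (auto intro!: derivative_eq_intros simp: has_real_derivative_iff_has_vector_derivative[symmetric] field_simps
             intro: has_field_derivative_at_within)
  from nn_integral_has_integral_lebesgue'[OF _ this] show ?thesis using assms by simp
qed

lemma ln_sq_bound:
  fixes x :: real
  assumes "x > 0"
  shows "(ln x)^2 \<le> 4 / x + x^2"
proof (cases "x \<ge> 1")
  case True
  have "0 \<le> ln x" using True assms by simp
  moreover have "ln x \<le> x" using ln_le_minus_one[OF assms] by linarith
  ultimately have "(ln x)^2 \<le> x^2" by (intro power_mono) auto
  then show ?thesis using assms by (smt (verit) divide_pos_pos)
next
  case False
  have sx: "sqrt x > 0" using assms by simp
  have "ln (1 / sqrt x) \<le> 1 / sqrt x - 1" using ln_le_minus_one[of "1 / sqrt x"] sx by simp
  moreover have "ln (1 / sqrt x) = - ln x / 2"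
    using assms by (simp add: ln_div ln_sqrt)
  ultimately have h: "- ln x \<le> 2 / sqrt x" by (simp add: field_simps)
  have "0 \<le> - ln x" using False assms by simp
  hence "(- ln x)^2 \<le> (2 / sqrt x)^2" using h by (intro power_mono) auto
  also have "(2 / sqrt x)^2 = 4 / x" using assms by (simp add: power_divide)
  finally show ?thesis by (smt (verit) zero_le_power2 power2_minus)
qed

lemma jb_sq: "(jb a)^2 = 1 + a^2"
  by (simp add: jb_def)

lemma jb_ge1: "jb a \<ge> 1"
  by (simp add: jb_def)

lemma jb_pos: "jb a > 0"
  using jb_ge1[of a] by linarith

lemma jb_0: "jb 0 = 1" by (simp add: jb_def)

lemma logm_ge1: "x \<ge> 1 \<Longrightarrow> logm x = 0" by (simp add: logm_def)
lemma logp_le1: "0 < x \<Longrightarrow> x \<le> 1 \<Longrightarrow> logp x = 0" by (simp add: logp_def)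
lemma logp_ge1: "x \<ge> 1 \<Longrightarrow> logp x = ln x" by (simp add: logp_def)

lemma ennsqrt_sq: "(ennsqrt x)^2 = x"
  by (cases x) (auto simp: ennsqrt_def ennreal_power)

lemma ennreal_le_by_pow:
  fixes y z :: ennreal
  assumes "y ^ n \<le> z ^ n" "n > 0"
  shows "y \<le> z"
proof (rule ccontr)
  assume "\<not> y \<le> z"
  hence "z < y" by simp
  have "z ^ n < y ^ n"
  proof (cases z rule: ennreal_cases)
    case (real a)
    show ?thesis
    proof (cases y rule: ennreal_cases)
      case (real b)
      with \<open>z < y\<close> \<open>z = ennreal a\<close> have "a < b" using ennreal_less_iff[OF \<open>0 \<le> a\<close>] by simp
      hence "a ^ n < b ^ n" using real \<open>0 \<le> a\<close> assms(2) by (intro power_strict_mono) auto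
      thus ?thesis using real \<open>z = ennreal a\<close> \<open>0 \<le> a\<close> by (simp add: ennreal_power ennreal_less_iff)
    next
      case top
      thus ?thesis using real assms(2) by (simp add: ennreal_power)
    qed
  next
    case top
    thus ?thesis using \<open>z < y\<close> by simp
  qed
  thus False using assms(1) by simp
qed

lemma sq_bound1:
  fixes y I :: ennreal
  assumes "y^2 \<le> ennreal c * I" "c \<ge> 0"
  shows "y \<le> ennreal (sqrt c) * ennsqrt I"
proof (rule ennreal_le_by_pow[of _ 2])
  have "(ennreal (sqrt c) * ennsqrt I)^2 = ennreal c * I"
    using assms(2) by (simp add: power_mult_distrib ennsqrt_sq ennreal_power)
  thus "y^2 \<le> (ennreal (sqrt c) * ennsqrt I)^2" using assms(1) by simp
qed simp

lemma sq_bound2: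
  fixes y I1 I2 :: ennreal
  assumes "y^2 \<le> ennreal c * (I1 + I2)" "c \<ge> 0"
  shows "y \<le> ennreal (sqrt c) * (ennsqrt I1 + ennsqrt I2)"
proof (rule ennreal_le_by_pow[of _ 2])
  have "I1 + I2 = (ennsqrt I1)^2 + (ennsqrt I2)^2" by (simp add: ennsqrt_sq)
  also have "\<dots> \<le> (ennsqrt I1 + ennsqrt I2)^2"
    by (simp add: power2_sum add_increasing2)
  finally have "ennreal c * (I1 + I2) \<le> ennreal c * (ennsqrt I1 + ennsqrt I2)^2"
    by (rule mult_left_mono) simp
  also have "\<dots> = (ennreal (sqrt c) * (ennsqrt I1 + ennsqrt I2))^2"
    using assms(2) by (simp add: power_mult_distrib ennreal_power)
  finally show "y^2 \<le> (ennreal (sqrt c) * (ennsqrt I1 + ennsqrt I2))^2" using assms(1) by simp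
qed simp

lemma avg_nn:
  fixes g :: "real \<Rightarrow> real" and y D :: ennreal
  assumes [measurable]: "g \<in> borel_measurable borel"
    and le: "\<And>s. s \<in> {1..2} \<Longrightarrow> y \<le> ennreal (g s) + D"
  shows "y^2 \<le> 2 * (\<integral>\<^sup>+s. ennreal ((g s)^2) * indicator {1..2} s \<partial>lborel) + 2 * D^2"
proof -
  have "y^2 = (\<integral>\<^sup>+s. y^2 * indicator {1..2::real} s \<partial>lborel)"
    by (simp add: nn_integral_cmult_indicator)
  also have "\<dots> \<le> (\<integral>\<^sup>+s. (2 * ennreal ((g s)^2) + 2 * D^2) * indicator {1..2::real} s \<partial>lborel)"
  proof (intro nn_integral_mono)
    fix s :: real
    show "y^2 * indicator {1..2} s \<le> (2 * ennreal ((g s)^2) + 2 * D^2) * indicator {1..2} s"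
    proof (cases "s \<in> {1..2}")
      case True
      have "y^2 \<le> (ennreal (g s) + D)^2" using le[OF True] by (rule power_mono) simp
      also have "\<dots> \<le> 2 * (ennreal (g s))^2 + 2 * D^2"
      proof -
        have "2 * ennreal (g s) * D \<le> (ennreal (g s))^2 + D^2" by (rule sum_of_squares_ge_ennreal)
        thus ?thesis by (simp add: power2_sum algebra_simps mult_2)
      qed
      also have "(ennreal (g s))^2 \<le> ennreal ((g s)^2)"
        by (cases "g s \<ge> 0") (auto simp: ennreal_power ennreal_neg)
      finally have "y^2 \<le> 2 * ennreal ((g s)^2) + 2 * D^2"
        by (simp add: add_right_mono mult_left_mono)
      then show ?thesis using True by simp
    qed simp
  qed
  also have "\<dots> = 2 * (\<integral>\<^sup>+s. ennreal ((g s)^2) * indicator {1..2} s \<partial>lborel) + 2 * D^2"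
    by (simp add: distrib_right nn_integral_add nn_integral_cmult nn_integral_cmult_indicator mult.assoc)
  finally show ?thesis .
qed


lemma real1:
  fixes x :: real
  assumes "0 < x" "x \<le> 2"
  shows "x^3 * (1 + (ln x)^2) \<le> 56"
proof -
  have "x^3 * (1 + (ln x)^2) \<le> x^3 * (1 + (4 / x + x^2))"
    using ln_sq_bound[OF assms(1)] assms by (intro mult_left_mono) auto
  also have "\<dots> = x^3 + 4 * x^2 + x^3 * x^2" using assms
    unfolding power2_eq_square power3_eq_cube by (simp add: field_simps)
  also have "\<dots> \<le> 2^3 + 4 * 2^2 + 2^3 * 2^2"
    using assms by (intro add_mono mult_left_mono mult_mono power_mono) auto
  finally show ?thesis by simp
qed

lemma real2:
  fixes x a w l :: real
  assumes "0 < x" "0 \<le> a" "a / x \<le> w"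
  shows "a^2 / (x^3 * (1 + l^2)) \<le> 2*pi*x*(w/(x * jb l))^2"
proof -
  have L: "1 + l^2 > 0" by (simp add: add_pos_nonneg)
  have e1: "a^2 / (x^3 * (1 + l^2)) = (a/x)^2 / (x * (1 + l^2))"
    using assms L unfolding power2_eq_square power3_eq_cube by (simp add: field_simps)
  have e2: "2*pi*x*(w/(x * jb l))^2 = 2*pi*(w^2 / (x * (1 + l^2)))"
  proof -
    have A: "(w/(x * jb l))^2 = w^2 / (x^2 * (1 + l^2))"
      unfolding power_divide power_mult_distrib jb_sq ..
    have B: "x * (w^2 / (x^2 * (1 + l^2))) = w^2 / (x * (1 + l^2))"
      using assms L by (simp add: power2_eq_square)
    have "2*pi*x*(w/(x * jb l))^2 = 2*pi*(x*(w/(x * jb l))^2)" by (simp only: mult.assoc)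
    also have "\<dots> = 2*pi*(x*(w^2 / (x^2 * (1 + l^2))))" by (simp only: A)
    also have "\<dots> = 2*pi*(w^2 / (x * (1 + l^2)))" by (simp only: B)
    finally show ?thesis .
  qed
  have "0 \<le> a / x" using assms by simp
  hence "(a / x)^2 \<le> w^2" using assms(3) by (intro power_mono) auto
  hence "(a/x)^2 / (x * (1 + l^2)) \<le> w^2 / (x * (1 + l^2))"
    using L assms by (intro divide_right_mono) auto
  also have "\<dots> \<le> 2 * pi * (w^2 / (x * (1 + l^2)))"
  proof -
    have "0 \<le> w^2 / (x * (1 + l^2))" using L assms by simp
    from mult_right_mono[OF _ this, of 1 "2*pi"] show ?thesis using pi_gt3 by simp
  qed
  finally show ?thesis using e1 e2 by simp
qed

lemma real3:
  fixes x a :: real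
  assumes "1 \<le> x" "x \<le> 2" "0 \<le> a"
  shows "a^2 \<le> 20 * (2*pi*x*(a/(x*(jb x)^2*jb(ln x)))^2)"
proof -
  have lnx: "0 \<le> ln x" "ln x \<le> 1" using assms ln_le_minus_one[of x] by auto
  have l2: "(ln x)^2 \<le> 1" using lnx by (simp add: power_le_one)
  have "x * (1 + x^2)^2 * (1 + (ln x)^2) \<le> 2 * (1 + 2^2)^2 * (1 + 1)"
    using assms l2 by (intro mult_mono power_mono add_mono) auto
  hence B: "x * (1 + x^2)^2 * (1 + (ln x)^2) \<le> 40 * pi" using pi_gt3 by simp
  have X: "1 + x^2 > 0" "1 + (ln x)^2 > 0" by (simp_all add: add_pos_nonneg)
  have P: "x * (1 + x^2)^2 * (1 + (ln x)^2) > 0" using assms X by (intro mult_pos_pos zero_less_power) auto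
  define M where "M = (1 + x^2)^2 * (1 + (ln x)^2)"
  have Mp: "M > 0" using X unfolding M_def by simp
  have A: "(a/(x*(jb x)^2*jb(ln x)))^2 = a^2 / (x^2 * M)"
    unfolding power_divide power_mult_distrib jb_sq M_def by (simp add: mult.assoc)
  have G: "\<And>x M a::real. x > 0 \<Longrightarrow> M > 0 \<Longrightarrow> 20*(2*pi*x*(a^2/(x^2*M))) = a^2*(40*pi/(x*M))"
    by (simp add: field_simps power2_eq_square)
  have "20 * (2*pi*x*(a/(x*(jb x)^2*jb(ln x)))^2) = a^2 * (40 * pi / (x * (1 + x^2)^2 * (1 + (ln x)^2)))"
    unfolding A using G[of x M a] assms Mp by (simp add: M_def mult.assoc)
  also have "\<dots> \<ge> a^2 * 1"
    using B P by (intro mult_left_mono) (auto simp: field_simps)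
  finally show ?thesis by simp
qed


lemma est0a:
  assumes u: "schwartz u" and r: "0 < r" "r \<le> 1"
  shows "ennreal (norm (profile u r)) \<le> ennreal 17 * H30 (profile u)"
proof -
  define v where "v = profile u"
  have dv: "\<And>x. (v has_vector_derivative dr v x) (at x)"
    using drk_deriv[OF u, of 0] by (simp add: v_def)
  have cdv: "continuous_on A (dr v)" for A using drk_cont[OF u, where k=1] by (simp add: v_def)
  have [measurable]: "v \<in> borel_measurable borel" "dr v \<in> borel_measurable borel"
    using drk_meas[OF u, of 0] drk_meas[OF u, of 1] by (simp_all add: v_def)
  define Q2 where "Q2 = (\<integral>\<^sup>+x. ennreal (2*pi*x*(norm (wk 1 (dr v) x / (x * jb (ln x))))^2) * indicator {0<..} x \<partial>lborel)"
  define Q3 where "Q3 = (\<integral>\<^sup>+x. ennreal (2*pi*x*(norm (v x / complex_of_real (x * (jb x)^2 * jb (ln x))))^2) * indicator {0<..} x \<partial>lborel)"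
  have H: "H30 v = L2 (drk 3 v) + ennsqrt Q2 + ennsqrt Q3"
    by (simp add: H30_def L2_def Q2_def Q3_def)
  define D where "D = (\<integral>\<^sup>+x. ennreal (norm (dr v x)) * indicator {r..2} x \<partial>lborel)"
  have stepa: "ennreal (norm (v r)) \<le> ennreal (norm (v s)) + D" if s: "s \<in> {1..2}" for s
  proof -
    have "ennreal (norm (v s - v r)) \<le> (\<integral>\<^sup>+x. ennreal (norm (dr v x)) * indicator {r..s} x \<partial>lborel)"
      by (rule ftc_nn) (use s r dv cdv in auto)
    also have "\<dots> \<le> D" unfolding D_def using s by (intro nn_integral_mono) (auto simp: indicator_def)
    finally have 1: "ennreal (norm (v s - v r)) \<le> D" .
    have "norm (v r) \<le> norm (v s) + norm (v s - v r)"
      using norm_triangle_ineq4[of "v s" "v s - v r"] by simp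
    hence "ennreal (norm (v r)) \<le> ennreal (norm (v s) + norm (v s - v r))"
      by (rule ennreal_leI)
    also have "\<dots> = ennreal (norm (v s)) + ennreal (norm (v s - v r))"
      by (rule ennreal_plus) auto
    also have "\<dots> \<le> ennreal (norm (v s)) + D" using 1 by (rule add_left_mono)
    finally show ?thesis .
  qed
  have avg: "(ennreal (norm (v r)))^2 \<le> 2 * (\<integral>\<^sup>+s. ennreal ((norm (v s))^2) * indicator {1..2} s \<partial>lborel) + 2 * D^2"
    by (rule avg_nn[OF _ stepa]) measurable
  have Dsq: "D^2 \<le> (\<integral>\<^sup>+x. ennreal (x^3 * (1 + (ln x)^2)) * indicator {r..2} x \<partial>lborel) *
      (\<integral>\<^sup>+x. ennreal ((norm (dr v x))^2 / (x^3 * (1 + (ln x)^2))) * indicator {r..2} x \<partial>lborel)"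
    unfolding D_def
    by (rule csw[of "\<lambda>x. norm (dr v x)" "\<lambda>x. x^3 * (1 + (ln x)^2)" "{r..2}"])
       (use r in \<open>auto intro!: mult_pos_pos add_pos_nonneg\<close>)
  have Wi: "(\<integral>\<^sup>+x. ennreal (x^3 * (1 + (ln x)^2)) * indicator {r..2} x \<partial>lborel) \<le> ennreal 112"
  proof -
    have "(\<integral>\<^sup>+x. ennreal (x^3 * (1 + (ln x)^2)) * indicator {r..2} x \<partial>lborel) \<le> ennreal (56 * (2 - r))"
      using r by (intro const_int real1) auto
    also have "\<dots> \<le> ennreal 112" using r by (intro ennreal_leI) auto
    finally show ?thesis .
  qed
  have I2: "(\<integral>\<^sup>+x. ennreal ((norm (dr v x))^2 / (x^3 * (1 + (ln x)^2))) * indicator {r..2} x \<partial>lborel) \<le> ennreal 1 * Q2"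
    unfolding Q2_def
  proof (rule dom_nn)
    fix x assume x: "x \<in> {r..2}"
    have "norm (dr v x) / x \<le> wk 1 (dr v) x" unfolding wk1_eq by simp
    from real2[OF _ _ this, of "ln x"] x r
    have R: "(norm (dr v x))^2 / (x^3 * (1 + (ln x)^2)) \<le> 2*pi*x*(wk 1 (dr v) x / (x * jb (ln x)))^2"
      by simp
    show "(norm (dr v x))^2 / (x^3 * (1 + (ln x)^2)) \<le> 1 * (2*pi*x*(norm (wk 1 (dr v) x / (x * jb (ln x))))^2)"
      unfolding real_norm_def power2_abs using R by simp
  qed (use r in auto)
  have I3: "(\<integral>\<^sup>+s. ennreal ((norm (v s))^2) * indicator {1..2} s \<partial>lborel) \<le> ennreal 20 * Q3"
    unfolding Q3_def
  proof (rule dom_nn)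
    fix x :: real assume x: "x \<in> {1..2}"
    have pos: "x * (jb x)^2 * jb (ln x) > 0" using x jb_pos[of x] jb_pos[of "ln x"] by (intro mult_pos_pos zero_less_power) auto
    have "norm (v x / complex_of_real (x * (jb x)^2 * jb (ln x))) = norm (v x) / (x * (jb x)^2 * jb (ln x))"
      unfolding norm_divide norm_of_real abs_of_pos[OF pos] ..
    with real3[of x "norm (v x)"] x
    show "(norm (v x))^2 \<le> 20 * (2*pi*x*(norm (v x / complex_of_real (x * (jb x)^2 * jb (ln x))))^2)"
      by simp
  qed auto
  have "(ennreal (norm (v r)))^2 \<le> 2 * (ennreal 20 * Q3) + 2 * (ennreal 112 * (ennreal 1 * Q2))"
  proof -
    have "D^2 \<le> ennreal 112 * (ennreal 1 * Q2)"
      using Dsq Wi I2 by (meson dual_order.trans mult_mono zero_le)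
    thus ?thesis using avg I3 by (meson add_mono dual_order.trans mult_left_mono zero_le)
  qed
  also have "\<dots> \<le> ennreal 264 * (Q2 + Q3)"
  proof -
    have a1: "2 * (ennreal 20 * Q3) = 40 * Q3" by (simp add: mult.assoc[symmetric])
    have a2: "2 * (ennreal 112 * (ennreal 1 * Q2)) = 224 * Q2" by (simp add: mult.assoc[symmetric])
    have "2 * (ennreal 20 * Q3) + 2 * (ennreal 112 * (ennreal 1 * Q2)) = 40 * Q3 + 224 * Q2"
      unfolding a1 a2 ..
    also have "\<dots> = 224 * Q2 + 40 * Q3" by (rule add.commute)
    also have "\<dots> \<le> 264 * Q2 + 264 * Q3"
      by (intro add_mono mult_right_mono) auto
    also have "\<dots> = ennreal 264 * (Q2 + Q3)" by (simp add: distrib_left)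
    finally show ?thesis .
  qed
  finally have "ennreal (norm (v r)) \<le> ennreal (sqrt 264) * (ennsqrt Q2 + ennsqrt Q3)"
    by (rule sq_bound2) simp
  also have "\<dots> \<le> ennreal 17 * H30 v"
  proof (rule mult_mono)
    have "sqrt 264 \<le> sqrt (17^2)" by (intro real_sqrt_le_mono) simp
    thus "ennreal (sqrt 264) \<le> ennreal 17" by (intro ennreal_leI) simp
    show "ennsqrt Q2 + ennsqrt Q3 \<le> H30 v" unfolding H add.assoc
      by (rule add_increasing) simp_all
  qed auto
  finally show ?thesis by (simp add: v_def)
qed


lemma jb_meas [measurable]: "jb \<in> borel_measurable borel"
  unfolding jb_def by measurable
lemma logm_meas [measurable]: "logm \<in> borel_measurable borel"
  unfolding logm_def by measurable
lemma logp_meas [measurable]: "logp \<in> borel_measurable borel"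
  unfolding logp_def by measurable

lemma ennreal_plus_le: "ennreal (a + b) \<le> ennreal a + ennreal b"
proof -
  have "ennreal (a + b) \<le> ennreal (max a 0 + max b 0)" by (intro ennreal_leI) auto
  also have "\<dots> = ennreal (max a 0) + ennreal (max b 0)" by (rule ennreal_plus) auto
  also have "\<dots> = ennreal a + ennreal b"
  proof -
    have "ennreal (max t 0) = ennreal t" for t :: real by (cases "t \<ge> 0") (auto simp: ennreal_neg max_def)
    thus ?thesis by simp
  qed
  finally show ?thesis .
qed

lemma dom2_nn:
  fixes \<phi> \<psi>1 \<psi>2 :: "real \<Rightarrow> real"
  assumes [measurable]: "\<phi> \<in> borel_measurable borel" "S \<in> sets borel"
    "\<psi>1 \<in> borel_measurable borel" "\<psi>2 \<in> borel_measurable borel"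
    and S: "S \<subseteq> {0<..}" and c: "c > 0" and le: "\<And>x. x \<in> S \<Longrightarrow> \<phi> x \<le> c * (\<psi>1 x + \<psi>2 x)"
  shows "(\<integral>\<^sup>+x. ennreal (\<phi> x) * indicator S x \<partial>lborel) \<le> ennreal c *
     ((\<integral>\<^sup>+x. ennreal (\<psi>1 x) * indicator {0<..} x \<partial>lborel) + (\<integral>\<^sup>+x. ennreal (\<psi>2 x) * indicator {0<..} x \<partial>lborel))"
proof -
  have "(\<integral>\<^sup>+x. ennreal (\<phi> x) * indicator S x \<partial>lborel) \<le> ennreal c * (\<integral>\<^sup>+x. ennreal (\<psi>1 x + \<psi>2 x) * indicator {0<..} x \<partial>lborel)"
    by (rule dom_nn) (use S c le in auto)
  also have "(\<integral>\<^sup>+x. ennreal (\<psi>1 x + \<psi>2 x) * indicator {0<..} x \<partial>lborel) \<le>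
      (\<integral>\<^sup>+x. ennreal (\<psi>1 x) * indicator {0<..} x + ennreal (\<psi>2 x) * indicator {0<..} x \<partial>lborel)"
    by (intro nn_integral_mono) (auto simp: indicator_def ennreal_plus_le)
  also have "\<dots> = (\<integral>\<^sup>+x. ennreal (\<psi>1 x) * indicator {0<..} x \<partial>lborel) + (\<integral>\<^sup>+x. ennreal (\<psi>2 x) * indicator {0<..} x \<partial>lborel)"
    by (rule nn_integral_add) measurable
  finally show ?thesis by (simp add: mult_left_mono)
qed

lemma normsq_deriv:
  fixes f :: "real \<Rightarrow> 'a::real_inner"
  assumes "(f has_vector_derivative f') (at x)"
  shows "((\<lambda>x. (norm (f x))^2) has_vector_derivative 2 * inner (f x) f') (at x)"
proof -
  have D: "(f has_derivative (\<lambda>h. h *\<^sub>R f')) (at x)" using assms by (simp add: has_vector_derivative_def)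
  have "((\<lambda>x. inner (f x) (f x)) has_derivative (\<lambda>h. inner (f x) (h *\<^sub>R f') + inner (h *\<^sub>R f') (f x))) (at x)"
    using has_derivative_inner[OF D D] .
  moreover have "(\<lambda>h. inner (f x) (h *\<^sub>R f') + inner (h *\<^sub>R f') (f x)) = (\<lambda>h. h *\<^sub>R (2 * inner (f x) f'))"
    by (auto simp: inner_commute algebra_simps)
  ultimately show ?thesis by (simp add: has_vector_derivative_def power2_norm_eq_inner)
qed

lemma inner_bound: "norm (2 * inner (a::'a::real_inner) b) \<le> 2 * norm a * norm b"
  using Cauchy_Schwarz_ineq2[of a b] by simp

lemma sq_ftc:
  fixes f :: "real \<Rightarrow> complex"
  assumes "a \<le> b" "\<And>x. (f has_vector_derivative f' x) (at x)" "continuous_on UNIV f'"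
  shows "ennreal \<bar>(norm (f b))^2 - (norm (f a))^2\<bar> \<le> (\<integral>\<^sup>+x. ennreal (2 * norm (f x) * norm (f' x)) * indicator {a..b} x \<partial>lborel)"
proof -
  have cf: "continuous_on UNIV f"
    by (rule continuous_at_imp_continuous_on) (use assms(2) has_vector_derivative_continuous in blast)
  have "ennreal (norm ((norm (f b))^2 - (norm (f a))^2)) \<le> (\<integral>\<^sup>+x. ennreal (norm (2 * inner (f x) (f' x))) * indicator {a..b} x \<partial>lborel)"
    by (rule ftc_nn[OF assms(1) normsq_deriv[OF assms(2)]])
       (intro continuous_intros continuous_on_subset[OF cf] continuous_on_subset[OF assms(3)]; simp)
  also have "\<dots> \<le> (\<integral>\<^sup>+x. ennreal (2 * norm (f x) * norm (f' x)) * indicator {a..b} x \<partial>lborel)"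
    by (intro nn_integral_mono mult_right_mono ennreal_leI inner_bound) simp
  finally show ?thesis by simp
qed

lemma sq_tail:
  fixes f :: "real \<Rightarrow> complex"
  assumes "\<And>x. (f has_vector_derivative f' x) (at x)" "continuous_on UNIV f'" "(f \<longlongrightarrow> 0) at_top"
  shows "ennreal ((norm (f a))^2) \<le> (\<integral>\<^sup>+x. ennreal (2 * norm (f x) * norm (f' x)) * indicator {a..} x \<partial>lborel)"
proof -
  have cf: "continuous_on UNIV f"
    by (rule continuous_at_imp_continuous_on) (use assms(1) has_vector_derivative_continuous in blast)
  have lim: "((\<lambda>x. (norm (f x))^2) \<longlongrightarrow> 0) at_top"
    using tendsto_power[OF tendsto_norm[OF assms(3)], of 2] by simp
  have "ennreal (norm ((norm (f a))^2)) \<le> (\<integral>\<^sup>+x. ennreal (norm (2 * inner (f x) (f' x))) * indicator {a..} x \<partial>lborel)"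
    by (rule tail_nn[OF normsq_deriv[OF assms(1)] _ lim])
       (intro continuous_intros continuous_on_subset[OF cf] continuous_on_subset[OF assms(2)]; simp)
  also have "\<dots> \<le> (\<integral>\<^sup>+x. ennreal (2 * norm (f x) * norm (f' x)) * indicator {a..} x \<partial>lborel)"
    by (intro nn_integral_mono mult_right_mono ennreal_leI inner_bound) simp
  finally show ?thesis by simp
qed


lemma real4:
  fixes x a b :: real
  assumes "x > 0"
  shows "2 * a * b \<le> 2*pi*x*(a/x)^2 + 2*pi*x*b^2"
proof -
  have "a^2/x + x*b^2 - 2*a*b = (a - x*b)^2 / x"
    using assms by (simp add: field_simps power2_eq_square)
  also have "\<dots> \<ge> 0" using assms by simp
  finally have 1: "2*a*b \<le> a^2/x + x*b^2" by simp
  have 2: "a^2/x \<le> 2*pi*x*(a/x)^2"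
  proof -
    have "2*pi*x*(a/x)^2 = 2*pi*(a^2/x)" using assms by (simp add: power2_eq_square field_simps)
    moreover have "a^2/x \<ge> 0" using assms by simp
    ultimately show ?thesis using pi_gt3 mult_right_mono[of 1 "2*pi" "a^2/x"] by simp
  qed
  have 3: "x*b^2 \<le> 2*pi*x*b^2"
    using pi_gt3 assms mult_right_mono[of 1 "2*pi" "x*b^2"] by (simp add: mult.assoc)
  show ?thesis using 1 2 3 by linarith
qed

lemma div_bound:
  assumes "ennreal y \<le> ennreal (c * j) * H" "j > 0" "c \<ge> 0" "y \<ge> 0"
  shows "ennreal (y / j) \<le> ennreal c * H"
proof -
  have "ennreal (y / j) = ennreal y * ennreal (1 / j)" using assms by (simp add: ennreal_mult[symmetric])
  also have "\<dots> \<le> ennreal (c * j) * H * ennreal (1 / j)" using assms(1) by (rule mult_right_mono) simp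
  also have "\<dots> = (ennreal (c * j) * ennreal (1 / j)) * H" by (simp only: mult_ac)
  also have "ennreal (c * j) * ennreal (1 / j) = ennreal (c * j * (1 / j))"
    using assms by (simp add: ennreal_mult[symmetric])
  also have "c * j * (1 / j) = c" using assms by simp
  finally show ?thesis .
qed

lemma est0b:
  assumes u: "schwartz u" and r: "1 \<le> r"
  shows "ennreal (norm (profile u r)) \<le> ennreal 1 * H10 (profile u)"
proof -
  define v where "v = profile u"
  have dv: "\<And>x. (v has_vector_derivative dr v x) (at x)"
    using drk_deriv[OF u, of 0] by (simp add: v_def)
  have cdv: "continuous_on UNIV (dr v)" using drk_cont[OF u, where k=1] by (simp add: v_def)
  have lim: "(v \<longlongrightarrow> 0) at_top" using drk_lim[OF u, of 0] by (simp add: v_def)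
  have [measurable]: "v \<in> borel_measurable borel" "dr v \<in> borel_measurable borel"
    using drk_meas[OF u, of 0] drk_meas[OF u, of 1] by (simp_all add: v_def)
  define Qa where "Qa = (\<integral>\<^sup>+x. ennreal (2*pi*x*(norm (dr v x))^2) * indicator {0<..} x \<partial>lborel)"
  define Qb where "Qb = (\<integral>\<^sup>+x. ennreal (2*pi*x*(norm (v x / complex_of_real (x * jb (logm x))))^2) * indicator {0<..} x \<partial>lborel)"
  have H: "H10 v = ennsqrt Qa + ennsqrt Qb"
    by (simp add: H10_def L2_def Qa_def Qb_def)
  have "(ennreal (norm (v r)))^2 = ennreal ((norm (v r))^2)" by (simp add: ennreal_power)
  also have "\<dots> \<le> (\<integral>\<^sup>+x. ennreal (2 * norm (v x) * norm (dr v x)) * indicator {r..} x \<partial>lborel)"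
    by (rule sq_tail[OF dv cdv lim])
  also have "\<dots> \<le> ennreal 1 * (Qb + Qa)"
    unfolding Qa_def Qb_def
  proof (rule dom2_nn)
    fix x assume x: "x \<in> {r..}"
    hence x1: "x \<ge> 1" using r by simp
    have "norm (v x / complex_of_real (x * jb (logm x))) = norm (v x) / x"
      using x1 by (simp add: logm_ge1 jb_0 norm_divide)
    then show "2 * norm (v x) * norm (dr v x) \<le> 1 * (2*pi*x*(norm (v x / complex_of_real (x * jb (logm x))))^2 + 2*pi*x*(norm (dr v x))^2)"
      using real4[of x "norm (v x)" "norm (dr v x)"] x1 by simp
  qed (use r in auto)
  finally have "ennreal (norm (v r)) \<le> ennreal (sqrt 1) * (ennsqrt Qb + ennsqrt Qa)"
    by (rule sq_bound2) simp
  also have "\<dots> = ennreal 1 * H10 v" unfolding H by (simp add: add.commute)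
  finally show ?thesis by (simp add: v_def)
qed

lemma est2a:
  assumes u: "schwartz u" and e: "equivariant 2 u" and r: "0 < r" "r \<le> 1"
  shows "ennreal (norm (profile u r)) \<le> ennreal 1 * H12 (profile u)"
proof -
  define v where "v = profile u"
  have dv: "\<And>x. (v has_vector_derivative dr v x) (at x)"
    using drk_deriv[OF u, of 0] by (simp add: v_def)
  have cdv: "continuous_on UNIV (dr v)" using drk_cont[OF u, where k=1] by (simp add: v_def)
  have v0: "v 0 = 0" using equiv2_zero[OF e] by (simp add: v_def profile_def)
  have [measurable]: "v \<in> borel_measurable borel" "dr v \<in> borel_measurable borel"
    using drk_meas[OF u, of 0] drk_meas[OF u, of 1] by (simp_all add: v_def)
  define Qa where "Qa = (\<integral>\<^sup>+x. ennreal (2*pi*x*(norm (dr v x))^2) * indicator {0<..} x \<partial>lborel)"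
  define Qb where "Qb = (\<integral>\<^sup>+x. ennreal (2*pi*x*(norm (v x / complex_of_real (x * jb (logp x))))^2) * indicator {0<..} x \<partial>lborel)"
  have H: "H12 v = ennsqrt Qa + ennsqrt Qb"
    by (simp add: H12_def L2_def Qa_def Qb_def)
  have "(ennreal (norm (v r)))^2 = ennreal \<bar>(norm (v r))^2 - (norm (v 0))^2\<bar>" by (simp add: ennreal_power v0)
  also have "\<dots> \<le> (\<integral>\<^sup>+x. ennreal (2 * norm (v x) * norm (dr v x)) * indicator {0..r} x \<partial>lborel)"
    by (rule sq_ftc[OF _ dv cdv]) (use r in simp)
  also have "\<dots> = (\<integral>\<^sup>+x. ennreal (2 * norm (v x) * norm (dr v x)) * indicator {0<..r} x \<partial>lborel)"
    by (intro nn_integral_cong) (auto simp: indicator_def v0)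
  also have "\<dots> \<le> ennreal 1 * (Qb + Qa)"
    unfolding Qa_def Qb_def
  proof (rule dom2_nn)
    fix x assume x: "x \<in> {0<..r}"
    have "norm (v x / complex_of_real (x * jb (logp x))) = norm (v x) / x"
      using x r by (simp add: logp_le1 jb_0 norm_divide)
    then show "2 * norm (v x) * norm (dr v x) \<le> 1 * (2*pi*x*(norm (v x / complex_of_real (x * jb (logp x))))^2 + 2*pi*x*(norm (dr v x))^2)"
      using real4[of x "norm (v x)" "norm (dr v x)"] x by simp
  qed (use r in auto)
  finally have "ennreal (norm (v r)) \<le> ennreal (sqrt 1) * (ennsqrt Qb + ennsqrt Qa)"
    by (rule sq_bound2) simp
  also have "\<dots> = ennreal 1 * H12 v" unfolding H by (simp add: add.commute)
  finally show ?thesis by (simp add: v_def)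
qed


lemma grow_gen:
  fixes f :: "real \<Rightarrow> complex" and W \<psi> :: "real \<Rightarrow> real"
  assumes d: "\<And>x. (f has_vector_derivative f' x) (at x)" and c: "continuous_on UNIV f'"
    and [measurable]: "f' \<in> borel_measurable borel" "W \<in> borel_measurable borel"
    and a: "0 < a" "a \<le> r"
    and Wp: "\<And>x. x \<in> {a..r} \<Longrightarrow> W x > 0"
    and M0: "M \<ge> 0" and M: "(\<integral>\<^sup>+x. ennreal (W x) * indicator {a..r} x \<partial>lborel) \<le> ennreal M"
    and le: "\<And>x. x \<in> {a..r} \<Longrightarrow> (norm (f' x))^2 / W x \<le> \<psi> x"
  shows "ennreal (norm (f r)) \<le> ennreal (norm (f a)) + ennreal (sqrt M) * ennsqrt (\<integral>\<^sup>+x. ennreal (\<psi> x) * indicator {0<..} x \<partial>lborel)"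
proof -
  define D where "D = (\<integral>\<^sup>+x. ennreal (norm (f' x)) * indicator {a..r} x \<partial>lborel)"
  have 1: "ennreal (norm (f r - f a)) \<le> D" unfolding D_def
    by (rule ftc_nn) (use a d continuous_on_subset[OF c] in auto)
  have "D^2 \<le> (\<integral>\<^sup>+x. ennreal (W x) * indicator {a..r} x \<partial>lborel) *
      (\<integral>\<^sup>+x. ennreal ((norm (f' x))^2 / W x) * indicator {a..r} x \<partial>lborel)"
    unfolding D_def by (rule csw) (use Wp in auto)
  also have "\<dots> \<le> ennreal M * (ennreal 1 * (\<integral>\<^sup>+x. ennreal (\<psi> x) * indicator {0<..} x \<partial>lborel))"
    by (intro mult_mono M dom_nn) (use a le in auto)
  finally have "D \<le> ennreal (sqrt M) * ennsqrt (\<integral>\<^sup>+x. ennreal (\<psi> x) * indicator {0<..} x \<partial>lborel)"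
    by (intro sq_bound1) (use M0 in simp_all)
  moreover have "ennreal (norm (f r)) \<le> ennreal (norm (f a)) + ennreal (norm (f r - f a))"
  proof -
    have "norm (f r) \<le> norm (f a) + norm (f r - f a)"
      using norm_triangle_ineq4[of "f a" "f a - f r"] by (simp add: norm_minus_commute)
    hence "ennreal (norm (f r)) \<le> ennreal (norm (f a) + norm (f r - f a))" by (rule ennreal_leI)
    also have "\<dots> = ennreal (norm (f a)) + ennreal (norm (f r - f a))" by (rule ennreal_plus) auto
    finally show ?thesis .
  qed
  ultimately show ?thesis using 1 by (meson add_left_mono order_trans)
qed


lemma sqrt_ln_le_jb:
  assumes "r \<ge> 1"
  shows "1 + sqrt (ln r) \<le> 2 * jb (ln r)"
proof -
  have "ln r \<le> 1 + (ln r)^2"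
  proof (cases "ln r \<le> 1")
    case True then show ?thesis by (smt (verit) zero_le_power2)
  next
    case False
    hence "ln r \<le> (ln r)^2" by (simp add: power2_eq_square)
    then show ?thesis by simp
  qed
  hence "sqrt (ln r) \<le> jb (ln r)" unfolding jb_def by (rule real_sqrt_le_mono)
  thus ?thesis using jb_ge1[of "ln r"] by simp
qed

lemma comb_bound:
  fixes A B H :: ennreal
  assumes "y \<le> A + ennreal s * B" "A \<le> ennreal a * H" "B \<le> ennreal b * H" "s \<ge> 0" "a \<ge> 0" "b \<ge> 0"
  shows "y \<le> ennreal (a + s * b) * H"
proof -
  have "y \<le> ennreal a * H + ennreal s * (ennreal b * H)"
    using assms by (meson add_mono mult_left_mono order_trans zero_le)
  also have "\<dots> = ennreal (a + s * b) * H"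
    using assms by (simp add: ennreal_plus ennreal_mult distrib_right mult.assoc)
  finally show ?thesis .
qed

lemma est2b:
  assumes u: "schwartz u" and e: "equivariant 2 u" and r: "1 \<le> r"
  shows "ennreal (norm (profile u r) / jb (logp r)) \<le> ennreal 2 * H12 (profile u)"
proof -
  define v where "v = profile u"
  have dv: "\<And>x. (v has_vector_derivative dr v x) (at x)"
    using drk_deriv[OF u, of 0] by (simp add: v_def)
  have cdv: "continuous_on UNIV (dr v)" using drk_cont[OF u, where k=1] by (simp add: v_def)
  have [measurable]: "v \<in> borel_measurable borel" "dr v \<in> borel_measurable borel"
    using drk_meas[OF u, of 0] drk_meas[OF u, of 1] by (simp_all add: v_def)
  define Qa where "Qa = (\<integral>\<^sup>+x. ennreal (2*pi*x*(norm (dr v x))^2) * indicator {0<..} x \<partial>lborel)"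
  define Qb where "Qb = (\<integral>\<^sup>+x. ennreal (2*pi*x*(norm (v x / complex_of_real (x * jb (logp x))))^2) * indicator {0<..} x \<partial>lborel)"
  have H: "H12 v = ennsqrt Qa + ennsqrt Qb"
    by (simp add: H12_def L2_def Qa_def Qb_def)
  have g: "ennreal (norm (v r)) \<le> ennreal (norm (v 1)) + ennreal (sqrt (ln r)) * ennsqrt Qa"
    unfolding Qa_def
  proof (rule grow_gen[OF dv cdv, where W="\<lambda>x. 1/x"])
    show "(\<integral>\<^sup>+x. ennreal (1 / x) * indicator {1..r} x \<partial>lborel) \<le> ennreal (ln r)"
      using inv_int[of 1 r] r by simp
    fix x assume x: "x \<in> {1..r}"
    show "(norm (dr v x))^2 / (1 / x) \<le> 2 * pi * x * (norm (dr v x))^2"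
      using x pi_gt3 mult_right_mono[of 1 "2*pi" "x * (norm (dr v x))^2"] by (simp add: mult_ac)
  qed (use r in auto)
  have v1: "ennreal (norm (v 1)) \<le> ennreal 1 * H12 v" using est2a[OF u e, of 1] by (simp add: v_def)
  have qa: "ennsqrt Qa \<le> ennreal 1 * H12 v" unfolding H by (simp add: add_increasing2)
  have "ennreal (norm (v r)) \<le> ennreal (1 + sqrt (ln r) * 1) * H12 v"
    by (rule comb_bound[OF g v1 qa]) (use r in auto)
  also have "\<dots> \<le> ennreal (2 * jb (logp r)) * H12 v"
    using sqrt_ln_le_jb[OF r] r by (intro mult_right_mono ennreal_leI) (auto simp: logp_ge1)
  finally have "ennreal (norm (v r)) \<le> ennreal (2 * jb (logp r)) * H12 v" .
  from div_bound[OF this jb_pos] show ?thesis by (simp add: v_def)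
qed


lemma real5:
  fixes x a w l :: real
  assumes "0 < x" "0 \<le> a" "a \<le> w"
  shows "a^2 / (x * (1 + l^2)) \<le> 2*pi*x*(w/(x * jb l))^2"
proof -
  have L: "1 + l^2 > 0" by (simp add: add_pos_nonneg)
  have e2: "2*pi*x*(w/(x * jb l))^2 = 2*pi*(w^2 / (x * (1 + l^2)))"
  proof -
    have A: "(w/(x * jb l))^2 = w^2 / (x^2 * (1 + l^2))"
      unfolding power_divide power_mult_distrib jb_sq ..
    have B: "x * (w^2 / (x^2 * (1 + l^2))) = w^2 / (x * (1 + l^2))"
      using assms L by (simp add: power2_eq_square)
    have "2*pi*x*(w/(x * jb l))^2 = 2*pi*(x*(w/(x * jb l))^2)" by (simp only: mult.assoc)
    also have "\<dots> = 2*pi*(x*(w^2 / (x^2 * (1 + l^2))))" by (simp only: A)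
    also have "\<dots> = 2*pi*(w^2 / (x * (1 + l^2)))" by (simp only: B)
    finally show ?thesis .
  qed
  have "a^2 \<le> w^2" using assms by (intro power_mono) auto
  hence "a^2 / (x * (1 + l^2)) \<le> w^2 / (x * (1 + l^2))"
    using L assms by (intro divide_right_mono) auto
  also have "\<dots> \<le> 2 * pi * (w^2 / (x * (1 + l^2)))"
  proof -
    have "0 \<le> w^2 / (x * (1 + l^2))" using L assms by simp
    from mult_right_mono[OF _ this, of 1 "2*pi"] show ?thesis using pi_gt3 by simp
  qed
  finally show ?thesis using e2 by simp
qed

lemma real1b:
  fixes x :: real
  assumes "0 < x" "x \<le> 2"
  shows "x * (1 + (ln x)^2) \<le> 14"
proof -
  have "x * (1 + (ln x)^2) \<le> x * (1 + (4 / x + x^2))"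
    using ln_sq_bound[OF assms(1)] assms by (intro mult_left_mono) auto
  also have "\<dots> = x + 4 + x * x^2" using assms
    unfolding power2_eq_square by (simp add: field_simps)
  also have "\<dots> \<le> 2 + 4 + 2 * 2^2"
    using assms by (intro add_mono mult_mono power_mono) auto
  finally show ?thesis by simp
qed

lemma ln_sq_mono:
  fixes x r :: real
  assumes "1 \<le> x" "x \<le> r"
  shows "x^k * (1 + (ln x)^2) \<le> r^k * (1 + (ln r)^2)"
proof -
  have "0 \<le> ln x" "ln x \<le> ln r" using assms by auto
  hence "(ln x)^2 \<le> (ln r)^2" by (intro power_mono) auto
  moreover have "x^k \<le> r^k" using assms by (intro power_mono) auto
  ultimately show ?thesis using assms by (intro mult_mono) (auto simp: add_nonneg_nonneg)
qed

lemma ln_sq_12: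
  fixes x :: real
  assumes "1 \<le> x" "x \<le> 2"
  shows "x^k * (1 + (ln x)^2) \<le> 2^k * 2"
proof -
  have "0 \<le> ln x" "ln x \<le> 1" using assms ln_le_minus_one[of x] by auto
  hence "(ln x)^2 \<le> 1" by (simp add: power_le_one)
  moreover have "x^k \<le> 2^k" using assms by (intro power_mono) auto
  ultimately show ?thesis using assms by (intro mult_mono) auto
qed

lemma wpoly_int:
  fixes r :: real
  assumes "1 \<le> r"
  shows "(\<integral>\<^sup>+x. ennreal (x^k * (1 + (ln x)^2)) * indicator {1..r} x \<partial>lborel) \<le> ennreal (r^(Suc k) * (1 + (ln r)^2))"
proof -
  have "(\<integral>\<^sup>+x. ennreal (x^k * (1 + (ln x)^2)) * indicator {1..r} x \<partial>lborel) \<le> ennreal (r^k * (1 + (ln r)^2) * (r - 1))"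
    using assms by (intro const_int ln_sq_mono) (auto simp: add_nonneg_nonneg)
  also have "\<dots> \<le> ennreal (r^(Suc k) * (1 + (ln r)^2))"
  proof (intro ennreal_leI)
    have "r^k * (1 + (ln r)^2) * (r - 1) \<le> r^k * (1 + (ln r)^2) * r"
      using assms by (intro mult_left_mono) (auto simp: add_nonneg_nonneg)
    thus "r^k * (1 + (ln r)^2) * (r - 1) \<le> r^(Suc k) * (1 + (ln r)^2)" by (simp add: mult_ac)
  qed
  finally show ?thesis .
qed

lemma val1:
  fixes f :: "real \<Rightarrow> complex"
  assumes d: "\<And>x. (f has_vector_derivative f' x) (at x)" and c: "continuous_on UNIV f'"
    and [measurable]: "f \<in> borel_measurable borel" "f' \<in> borel_measurable borel"
  shows "(ennreal (norm (f 1)))^2 \<le> 2 * (\<integral>\<^sup>+s. ennreal ((norm (f s))^2) * indicator {1..2} s \<partial>lborel)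
          + 2 * (\<integral>\<^sup>+s. ennreal ((norm (f' s))^2) * indicator {1..2} s \<partial>lborel)"
proof -
  define D where "D = (\<integral>\<^sup>+x. ennreal (norm (f' x)) * indicator {1..2} x \<partial>lborel)"
  have stepa: "ennreal (norm (f 1)) \<le> ennreal (norm (f s)) + D" if s: "s \<in> {1..2}" for s
  proof -
    have "ennreal (norm (f s - f 1)) \<le> (\<integral>\<^sup>+x. ennreal (norm (f' x)) * indicator {1..s} x \<partial>lborel)"
      by (rule ftc_nn) (use s d continuous_on_subset[OF c] in auto)
    also have "\<dots> \<le> D" unfolding D_def using s by (intro nn_integral_mono) (auto simp: indicator_def)
    finally have 1: "ennreal (norm (f s - f 1)) \<le> D" .
    have "norm (f 1) \<le> norm (f s) + norm (f s - f 1)"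
      using norm_triangle_ineq4[of "f s" "f s - f 1"] by simp
    hence "ennreal (norm (f 1)) \<le> ennreal (norm (f s) + norm (f s - f 1))"
      by (rule ennreal_leI)
    also have "\<dots> = ennreal (norm (f s)) + ennreal (norm (f s - f 1))"
      by (rule ennreal_plus) auto
    also have "\<dots> \<le> ennreal (norm (f s)) + D" using 1 by (rule add_left_mono)
    finally show ?thesis .
  qed
  have avg: "(ennreal (norm (f 1)))^2 \<le> 2 * (\<integral>\<^sup>+s. ennreal ((norm (f s))^2) * indicator {1..2} s \<partial>lborel) + 2 * D^2"
    by (rule avg_nn[OF _ stepa]) measurable
  have "D^2 \<le> (\<integral>\<^sup>+x. ennreal 1 * indicator {1..2::real} x \<partial>lborel) *
      (\<integral>\<^sup>+x. ennreal ((norm (f' x))^2 / 1) * indicator {1..2} x \<partial>lborel)"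
    unfolding D_def by (rule csw[of "\<lambda>x. norm (f' x)" "\<lambda>x. 1" "{1..2}"]) auto
  also have "\<dots> = (\<integral>\<^sup>+s. ennreal ((norm (f' s))^2) * indicator {1..2} s \<partial>lborel)"
    by (simp add: nn_integral_cmult_indicator)
  finally have "D^2 \<le> (\<integral>\<^sup>+s. ennreal ((norm (f' s))^2) * indicator {1..2} s \<partial>lborel)" .
  with avg show ?thesis by (meson add_left_mono mult_left_mono order_trans zero_le)
qed


lemma real6:
  fixes b P K \<psi> :: real
  assumes "0 < P" "P \<le> K" "b / P \<le> \<psi>" "0 \<le> b"
  shows "b \<le> K * \<psi>"
proof -
  have "0 \<le> b / P" using assms by simp
  hence p: "0 \<le> \<psi>" using assms by linarith
  have "b = (b / P) * P" using assms by simp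
  also have "\<dots> \<le> \<psi> * P" using assms by (intro mult_right_mono) auto
  also have "\<dots> \<le> \<psi> * K" using assms p by (intro mult_left_mono) auto
  finally show ?thesis by (simp add: mult.commute)
qed

lemma est1a:
  assumes u: "schwartz u" and r: "0 < r" "r \<le> 1"
  shows "ennreal (norm (profile u r)) \<le> ennreal 10 * H21 (profile u)"
proof -
  define v where "v = profile u"
  have dv: "\<And>x. (v has_vector_derivative dr v x) (at x)"
    using drk_deriv[OF u, of 0] by (simp add: v_def)
  have cdv: "continuous_on A (dr v)" for A using drk_cont[OF u, where k=1] by (simp add: v_def)
  have [measurable]: "v \<in> borel_measurable borel" "dr v \<in> borel_measurable borel"
    using drk_meas[OF u, of 0] drk_meas[OF u, of 1] by (simp_all add: v_def)
  define Qa where "Qa = (\<integral>\<^sup>+x. ennreal (2*pi*x*(norm (drk 2 v x))^2) * indicator {0<..} x \<partial>lborel)"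
  define Qb where "Qb = (\<integral>\<^sup>+x. ennreal (2*pi*x*(norm (wk 1 v x / (x * jb (ln x))))^2) * indicator {0<..} x \<partial>lborel)"
  have H: "H21 v = ennsqrt Qa + ennsqrt Qb"
    by (simp add: H21_def L2_def Qa_def Qb_def)
  define D where "D = (\<integral>\<^sup>+x. ennreal (norm (dr v x)) * indicator {r..2} x \<partial>lborel)"
  have stepa: "ennreal (norm (v r)) \<le> ennreal (norm (v s)) + D" if s: "s \<in> {1..2}" for s
  proof -
    have "ennreal (norm (v s - v r)) \<le> (\<integral>\<^sup>+x. ennreal (norm (dr v x)) * indicator {r..s} x \<partial>lborel)"
      by (rule ftc_nn) (use s r dv cdv in auto)
    also have "\<dots> \<le> D" unfolding D_def using s by (intro nn_integral_mono) (auto simp: indicator_def)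
    finally have 1: "ennreal (norm (v s - v r)) \<le> D" .
    have "norm (v r) \<le> norm (v s) + norm (v s - v r)"
      using norm_triangle_ineq4[of "v s" "v s - v r"] by simp
    hence "ennreal (norm (v r)) \<le> ennreal (norm (v s) + norm (v s - v r))"
      by (rule ennreal_leI)
    also have "\<dots> = ennreal (norm (v s)) + ennreal (norm (v s - v r))"
      by (rule ennreal_plus) auto
    also have "\<dots> \<le> ennreal (norm (v s)) + D" using 1 by (rule add_left_mono)
    finally show ?thesis .
  qed
  have avg: "(ennreal (norm (v r)))^2 \<le> 2 * (\<integral>\<^sup>+s. ennreal ((norm (v s))^2) * indicator {1..2} s \<partial>lborel) + 2 * D^2"
    by (rule avg_nn[OF _ stepa]) measurable
  have Dsq: "D^2 \<le> (\<integral>\<^sup>+x. ennreal (x * (1 + (ln x)^2)) * indicator {r..2} x \<partial>lborel) *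
      (\<integral>\<^sup>+x. ennreal ((norm (dr v x))^2 / (x * (1 + (ln x)^2))) * indicator {r..2} x \<partial>lborel)"
    unfolding D_def
    by (rule csw[of "\<lambda>x. norm (dr v x)" "\<lambda>x. x * (1 + (ln x)^2)" "{r..2}"])
       (use r in \<open>auto intro!: mult_pos_pos add_pos_nonneg\<close>)
  have Wi: "(\<integral>\<^sup>+x. ennreal (x * (1 + (ln x)^2)) * indicator {r..2} x \<partial>lborel) \<le> ennreal 28"
  proof -
    have "(\<integral>\<^sup>+x. ennreal (x * (1 + (ln x)^2)) * indicator {r..2} x \<partial>lborel) \<le> ennreal (14 * (2 - r))"
      using r by (intro const_int real1b) auto
    also have "\<dots> \<le> ennreal 28" using r by (intro ennreal_leI) auto
    finally show ?thesis .
  qed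
  have I2: "(\<integral>\<^sup>+x. ennreal ((norm (dr v x))^2 / (x * (1 + (ln x)^2))) * indicator {r..2} x \<partial>lborel) \<le> ennreal 1 * Qb"
    unfolding Qb_def
  proof (rule dom_nn)
    fix x assume x: "x \<in> {r..2}"
    have "norm (dr v x) \<le> wk 1 v x" unfolding wk1_eq by simp
    from real5[OF _ _ this, of x "ln x"] x r
    have R: "(norm (dr v x))^2 / (x * (1 + (ln x)^2)) \<le> 2*pi*x*(wk 1 v x / (x * jb (ln x)))^2"
      by simp
    show "(norm (dr v x))^2 / (x * (1 + (ln x)^2)) \<le> 1 * (2*pi*x*(norm (wk 1 v x / (x * jb (ln x))))^2)"
      unfolding real_norm_def power2_abs using R by simp
  qed (use r in auto)
  have I3: "(\<integral>\<^sup>+s. ennreal ((norm (v s))^2) * indicator {1..2} s \<partial>lborel) \<le> ennreal 16 * Qb"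
    unfolding Qb_def
  proof (rule dom_nn)
    fix x :: real assume x: "x \<in> {1..2}"
    have "norm (v x) / x \<le> wk 1 v x" unfolding wk1_eq by simp
    from real2[OF _ _ this, of "ln x"] x
    have R: "(norm (v x))^2 / (x^3 * (1 + (ln x)^2)) \<le> 2*pi*x*(wk 1 v x / (x * jb (ln x)))^2"
      by simp
    have P: "0 < x^3 * (1 + (ln x)^2)" using x by (intro mult_pos_pos add_pos_nonneg) auto
    have "(norm (v x))^2 \<le> 16 * (2*pi*x*(wk 1 v x / (x * jb (ln x)))^2)"
      by (rule real6[OF P _ R]) (use ln_sq_12[of x 3] x in auto)
    then show "(norm (v x))^2 \<le> 16 * (2*pi*x*(norm (wk 1 v x / (x * jb (ln x))))^2)"
      unfolding real_norm_def power2_abs by simp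
  qed auto
  have "(ennreal (norm (v r)))^2 \<le> 2 * (ennreal 16 * Qb) + 2 * (ennreal 28 * (ennreal 1 * Qb))"
  proof -
    have "D^2 \<le> ennreal 28 * (ennreal 1 * Qb)"
      using Dsq Wi I2 by (meson dual_order.trans mult_mono zero_le)
    thus ?thesis using avg I3 by (meson add_mono dual_order.trans mult_left_mono zero_le)
  qed
  also have "\<dots> = ennreal 88 * Qb" by (simp add: mult.assoc[symmetric] distrib_right[symmetric])
  finally have "ennreal (norm (v r)) \<le> ennreal (sqrt 88) * ennsqrt Qb"
    by (rule sq_bound1) simp
  also have "\<dots> \<le> ennreal 10 * H21 v"
  proof (rule mult_mono)
    have "sqrt 88 \<le> sqrt (10^2)" by (intro real_sqrt_le_mono) simp
    thus "ennreal (sqrt 88) \<le> ennreal 10" by (intro ennreal_leI) simp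
    show "ennsqrt Qb \<le> H21 v" unfolding H by (rule add_increasing) simp_all
  qed auto
  finally show ?thesis by (simp add: v_def)
qed


lemma ennreal_max_le:
  assumes "ennreal a \<le> X" "ennreal b \<le> X"
  shows "ennreal (max a b) \<le> X"
  using assms by (cases "a \<le> b") (auto simp: max_def)

lemma est1c:
  assumes u: "schwartz u" and r: "1 \<le> r"
  shows "ennreal (wk 1 (profile u) r / jb (logp r)) \<le> ennreal 11 * H21 (profile u)"
proof -
  define v where "v = profile u"
  have dv: "\<And>x. (v has_vector_derivative dr v x) (at x)"
    using drk_deriv[OF u, of 0] by (simp add: v_def)
  have d1: "\<And>x. (dr v has_vector_derivative drk 2 v x) (at x)"
    using drk_deriv[OF u, of 1] by (simp add: v_def numeral_2_eq_2)
  have cdv: "continuous_on UNIV (dr v)" using drk_cont[OF u, where k=1] by (simp add: v_def)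
  have cd2: "continuous_on UNIV (drk 2 v)" using drk_cont[OF u, where k=2] by (simp add: v_def)
  have [measurable]: "v \<in> borel_measurable borel" "dr v \<in> borel_measurable borel" "drk 2 v \<in> borel_measurable borel"
    using drk_meas[OF u, of 0] drk_meas[OF u, of 1] drk_meas[OF u, of 2] by (simp_all add: v_def)
  define Qa where "Qa = (\<integral>\<^sup>+x. ennreal (2*pi*x*(norm (drk 2 v x))^2) * indicator {0<..} x \<partial>lborel)"
  define Qb where "Qb = (\<integral>\<^sup>+x. ennreal (2*pi*x*(norm (wk 1 v x / (x * jb (ln x))))^2) * indicator {0<..} x \<partial>lborel)"
  have H: "H21 v = ennsqrt Qa + ennsqrt Qb"
    by (simp add: H21_def L2_def Qa_def Qb_def)
  have qa: "ennsqrt Qa \<le> ennreal 1 * H21 v" unfolding H by (simp add: add_increasing2)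
  have qb: "ennsqrt Qb \<le> ennreal 1 * H21 v" unfolding H by (simp add: add_increasing)
  have pb: "(norm (dr v x))^2 / (x^1 * (1 + (ln x)^2)) \<le> 2*pi*x*(norm (wk 1 v x / (x * jb (ln x))))^2"
    if x: "x > 0" for x
  proof -
    have "norm (dr v x) \<le> wk 1 v x" unfolding wk1_eq by simp
    from real5[OF x _ this, of "ln x"]
    have R: "(norm (dr v x))^2 / (x * (1 + (ln x)^2)) \<le> 2*pi*x*(wk 1 v x / (x * jb (ln x)))^2"
      by simp
    show ?thesis unfolding real_norm_def power2_abs using R by simp
  qed
  have "(ennreal (norm (dr v 1)))^2 \<le> 2 * (\<integral>\<^sup>+s. ennreal ((norm (dr v s))^2) * indicator {1..2} s \<partial>lborel)
          + 2 * (\<integral>\<^sup>+s. ennreal ((norm (drk 2 v s))^2) * indicator {1..2} s \<partial>lborel)"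
    by (rule val1[OF d1 cd2]) measurable
  also have "\<dots> \<le> 2 * (ennreal 4 * Qb) + 2 * (ennreal 1 * Qa)"
  proof (intro add_mono mult_left_mono)
    show "(\<integral>\<^sup>+s. ennreal ((norm (dr v s))^2) * indicator {1..2} s \<partial>lborel) \<le> ennreal 4 * Qb"
      unfolding Qb_def
    proof (rule dom_nn)
      fix x :: real assume x: "x \<in> {1..2}"
      have P: "0 < x^1 * (1 + (ln x)^2)" using x by (intro mult_pos_pos add_pos_nonneg) auto
      show "(norm (dr v x))^2 \<le> 4 * (2*pi*x*(norm (wk 1 v x / (x * jb (ln x))))^2)"
        by (rule real6[OF P _ pb]) (use ln_sq_12[of x 1] x in auto)
    qed auto
    show "(\<integral>\<^sup>+s. ennreal ((norm (drk 2 v s))^2) * indicator {1..2} s \<partial>lborel) \<le> ennreal 1 * Qa"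
      unfolding Qa_def
    proof (rule dom_nn)
      fix x :: real assume x: "x \<in> {1..2}"
      have "2*pi*1 \<le> 2*pi*x" using x pi_gt3 by (intro mult_left_mono) auto
      hence "1 \<le> 2*pi*x" using pi_gt3 by linarith
      then show "(norm (drk 2 v x))^2 \<le> 1 * (2*pi*x*(norm (drk 2 v x))^2)"
        using mult_right_mono[of 1 "2*pi*x" "(norm (drk 2 v x))^2"] by simp
    qed auto
  qed auto
  also have "\<dots> \<le> ennreal 8 * (Qa + Qb)"
  proof -
    have "2 * (ennreal 4 * Qb) + 2 * (ennreal 1 * Qa) = 2 * Qa + 8 * Qb"
      by (simp add: mult.assoc[symmetric] add.commute)
    also have "\<dots> \<le> 8 * Qa + 8 * Qb" by (intro add_mono mult_right_mono) auto
    also have "\<dots> = ennreal 8 * (Qa + Qb)" by (simp add: distrib_left)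
    finally show ?thesis .
  qed
  finally have "ennreal (norm (dr v 1)) \<le> ennreal (sqrt 8) * (ennsqrt Qa + ennsqrt Qb)"
    by (rule sq_bound2) simp
  also have "\<dots> \<le> ennreal 3 * H21 v" unfolding H
  proof (rule mult_right_mono)
    have "sqrt 8 \<le> sqrt (3^2)" by (intro real_sqrt_le_mono) simp
    thus "ennreal (sqrt 8) \<le> ennreal 3" by (intro ennreal_leI) simp
  qed simp
  finally have dv1: "ennreal (norm (dr v 1)) \<le> ennreal 3 * H21 v" .
  have g1: "ennreal (norm (dr v r)) \<le> ennreal (norm (dr v 1)) + ennreal (sqrt (ln r)) * ennsqrt Qa"
    unfolding Qa_def
  proof (rule grow_gen[OF d1 cd2, where W="\<lambda>x. 1/x"])
    show "(\<integral>\<^sup>+x. ennreal (1 / x) * indicator {1..r} x \<partial>lborel) \<le> ennreal (ln r)"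
      using inv_int[of 1 r] r by simp
    fix x assume x: "x \<in> {1..r}"
    show "(norm (drk 2 v x))^2 / (1 / x) \<le> 2 * pi * x * (norm (drk 2 v x))^2"
      using x pi_gt3 mult_right_mono[of 1 "2*pi" "x * (norm (drk 2 v x))^2"] by (simp add: mult_ac)
  qed (use r in auto)
  have A: "ennreal (norm (dr v r)) \<le> ennreal (11 * jb (ln r)) * H21 v"
  proof -
    have "ennreal (norm (dr v r)) \<le> ennreal (3 + sqrt (ln r) * 1) * H21 v"
      by (rule comb_bound[OF g1 dv1 qa]) (use r in auto)
    also have "\<dots> \<le> ennreal (11 * jb (ln r)) * H21 v"
      using sqrt_ln_le_jb[OF r] jb_ge1[of "ln r"] by (intro mult_right_mono ennreal_leI) auto
    finally show ?thesis .
  qed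
  have g0: "ennreal (norm (v r)) \<le> ennreal (norm (v 1)) + ennreal (sqrt (r^2 * (1 + (ln r)^2))) * ennsqrt Qb"
    unfolding Qb_def
  proof (rule grow_gen[OF dv cdv, where W="\<lambda>x. x^1 * (1 + (ln x)^2)"])
    show "(\<integral>\<^sup>+x. ennreal (x^1 * (1 + (ln x)^2)) * indicator {1..r} x \<partial>lborel) \<le> ennreal (r^2 * (1 + (ln r)^2))"
      using wpoly_int[OF r, of 1] by (simp add: numeral_2_eq_2)
    fix x assume x: "x \<in> {1..r}"
    show "(norm (dr v x))^2 / (x^1 * (1 + (ln x)^2)) \<le> 2*pi*x*(norm (wk 1 v x / (x * jb (ln x))))^2"
      using pb x by simp
  qed (use r in \<open>auto intro!: mult_pos_pos add_pos_nonneg\<close>)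
  have sq: "sqrt (r^2 * (1 + (ln r)^2)) = r * jb (ln r)" using r by (simp add: jb_def real_sqrt_mult)
  have v1: "ennreal (norm (v 1)) \<le> ennreal 10 * H21 v" using est1a[OF u, of 1] by (simp add: v_def)
  have "ennreal (norm (v r)) \<le> ennreal (10 + r * jb (ln r) * 1) * H21 v"
    by (rule comb_bound[OF g0[unfolded sq] v1 qb]) (use r jb_pos[of "ln r"] in auto)
  also have "\<dots> \<le> ennreal (11 * jb (ln r) * r) * H21 v"
  proof (intro mult_right_mono ennreal_leI)
    have "1 \<le> r * jb (ln r)" using r jb_ge1[of "ln r"] by (metis mult_mono' mult_1 zero_le_one)
    thus "10 + r * jb (ln r) * 1 \<le> 11 * jb (ln r) * r" by (simp add: mult_ac)
  qed simp
  finally have "ennreal (norm (v r) / r) \<le> ennreal (11 * jb (ln r)) * H21 v"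
    by (rule div_bound) (use r jb_pos[of "ln r"] in auto)
  with A have "ennreal (wk 1 v r) \<le> ennreal (11 * jb (logp r)) * H21 v"
    unfolding wk1_eq using r by (simp add: logp_ge1 ennreal_max_le)
  moreover have "wk 1 v r \<ge> 0" unfolding wk1_eq by (simp add: le_max_iff_disj)
  ultimately have "ennreal (wk 1 v r / jb (logp r)) \<le> ennreal 11 * H21 v"
    by (intro div_bound[OF _ jb_pos]) auto
  thus ?thesis by (simp only: v_def)
qed


lemma one_le_2pix: "1 \<le> (x::real) \<Longrightarrow> 1 \<le> 2*pi*x"
proof -
  assume x: "1 \<le> x"
  have "2*pi*1 \<le> 2*pi*x" using x pi_gt3 by (intro mult_left_mono) auto
  thus ?thesis using pi_gt3 by linarith
qed

lemma est0c:
  assumes u: "schwartz u" and r: "1 \<le> r"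
  shows "ennreal (wk 2 (profile u) r / jb (logp r)) \<le> ennreal 18 * H30 (profile u)"
proof -
  define v where "v = profile u"
  have d2eq: "drk 2 v = dr (dr v)" by (simp add: numeral_2_eq_2)
  have dv: "\<And>x. (v has_vector_derivative dr v x) (at x)"
    using drk_deriv[OF u, of 0] by (simp add: v_def)
  have d1: "\<And>x. (dr v has_vector_derivative dr (dr v) x) (at x)"
    using drk_deriv[OF u, of 1] by (simp add: v_def)
  have d2: "\<And>x. (dr (dr v) has_vector_derivative drk 3 v x) (at x)"
    using drk_deriv[OF u, of 2] by (simp add: v_def numeral_3_eq_3 numeral_2_eq_2)
  have cdv: "continuous_on UNIV (dr v)" using drk_cont[OF u, where k=1] by (simp add: v_def)
  have cd2: "continuous_on UNIV (dr (dr v))" using drk_cont[OF u, where k=2] by (simp add: v_def numeral_2_eq_2)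
  have cd3: "continuous_on UNIV (drk 3 v)" using drk_cont[OF u, where k=3] by (simp add: v_def)
  have [measurable]: "v \<in> borel_measurable borel" "dr v \<in> borel_measurable borel" "dr (dr v) \<in> borel_measurable borel"
     "drk 3 v \<in> borel_measurable borel"
    using drk_meas[OF u, of 0] drk_meas[OF u, of 1] drk_meas[OF u, of 2] drk_meas[OF u, of 3]
    by (simp_all add: v_def numeral_2_eq_2)
  define Qa where "Qa = (\<integral>\<^sup>+x. ennreal (2*pi*x*(norm (drk 3 v x))^2) * indicator {0<..} x \<partial>lborel)"
  define Qb where "Qb = (\<integral>\<^sup>+x. ennreal (2*pi*x*(norm (wk 1 (dr v) x / (x * jb (ln x))))^2) * indicator {0<..} x \<partial>lborel)"
  define Qc where "Qc = (\<integral>\<^sup>+x. ennreal (2*pi*x*(norm (v x / complex_of_real (x * (jb x)^2 * jb (ln x))))^2) * indicator {0<..} x \<partial>lborel)"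
  have H: "H30 v = ennsqrt Qa + ennsqrt Qb + ennsqrt Qc"
    by (simp add: H30_def L2_def Qa_def Qb_def Qc_def)
  have qa: "ennsqrt Qa \<le> ennreal 1 * H30 v" unfolding H by (simp add: add_increasing2)
  have qb: "ennsqrt Qb \<le> ennreal 1 * H30 v" unfolding H
    by (simp add: add.assoc add_increasing2 add_increasing)
  have qab: "ennsqrt Qa + ennsqrt Qb \<le> H30 v" unfolding H by (simp add: add_increasing2)
  have pb1: "(norm (dr (dr v) x))^2 / (x^1 * (1 + (ln x)^2)) \<le> 2*pi*x*(norm (wk 1 (dr v) x / (x * jb (ln x))))^2"
    if x: "x > 0" for x
  proof -
    have "norm (dr (dr v) x) \<le> wk 1 (dr v) x" unfolding wk1_eq by simp
    from real5[OF x _ this, of "ln x"]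
    have R: "(norm (dr (dr v) x))^2 / (x * (1 + (ln x)^2)) \<le> 2*pi*x*(wk 1 (dr v) x / (x * jb (ln x)))^2"
      by simp
    show ?thesis unfolding real_norm_def power2_abs using R by simp
  qed
  have pb3: "(norm (dr v x))^2 / (x^3 * (1 + (ln x)^2)) \<le> 2*pi*x*(norm (wk 1 (dr v) x / (x * jb (ln x))))^2"
    if x: "x > 0" for x
  proof -
    have "norm (dr v x) / x \<le> wk 1 (dr v) x" unfolding wk1_eq by simp
    from real2[OF x _ this, of "ln x"]
    have R: "(norm (dr v x))^2 / (x^3 * (1 + (ln x)^2)) \<le> 2*pi*x*(wk 1 (dr v) x / (x * jb (ln x)))^2"
      by simp
    show ?thesis unfolding real_norm_def power2_abs using R by simp
  qed
  have Ib1: "(\<integral>\<^sup>+s. ennreal ((norm (dr (dr v) s))^2) * indicator {1..2} s \<partial>lborel) \<le> ennreal 4 * Qb"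
    unfolding Qb_def
  proof (rule dom_nn)
    fix x :: real assume x: "x \<in> {1..2}"
    have P: "0 < x^1 * (1 + (ln x)^2)" using x by (intro mult_pos_pos add_pos_nonneg) auto
    show "(norm (dr (dr v) x))^2 \<le> 4 * (2*pi*x*(norm (wk 1 (dr v) x / (x * jb (ln x))))^2)"
      by (rule real6[OF P _ pb1]) (use ln_sq_12[of x 1] x in auto)
  qed auto
  have Ib3: "(\<integral>\<^sup>+s. ennreal ((norm (dr v s))^2) * indicator {1..2} s \<partial>lborel) \<le> ennreal 16 * Qb"
    unfolding Qb_def
  proof (rule dom_nn)
    fix x :: real assume x: "x \<in> {1..2}"
    have P: "0 < x^3 * (1 + (ln x)^2)" using x by (intro mult_pos_pos add_pos_nonneg) auto
    show "(norm (dr v x))^2 \<le> 16 * (2*pi*x*(norm (wk 1 (dr v) x / (x * jb (ln x))))^2)"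
      by (rule real6[OF P _ pb3]) (use ln_sq_12[of x 3] x in auto)
  qed auto
  have "(ennreal (norm (dr (dr v) 1)))^2 \<le> 2 * (\<integral>\<^sup>+s. ennreal ((norm (dr (dr v) s))^2) * indicator {1..2} s \<partial>lborel)
          + 2 * (\<integral>\<^sup>+s. ennreal ((norm (drk 3 v s))^2) * indicator {1..2} s \<partial>lborel)"
    by (rule val1[OF d2 cd3]) measurable
  also have "\<dots> \<le> 2 * (ennreal 4 * Qb) + 2 * (ennreal 1 * Qa)"
  proof (intro add_mono mult_left_mono Ib1)
    show "(\<integral>\<^sup>+s. ennreal ((norm (drk 3 v s))^2) * indicator {1..2} s \<partial>lborel) \<le> ennreal 1 * Qa"
      unfolding Qa_def
    proof (rule dom_nn)
      fix x :: real assume x: "x \<in> {1..2}"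
      show "(norm (drk 3 v x))^2 \<le> 1 * (2*pi*x*(norm (drk 3 v x))^2)"
        using one_le_2pix[of x] x mult_right_mono[of 1 "2*pi*x" "(norm (drk 3 v x))^2"] by simp
    qed auto
  qed auto
  also have "\<dots> \<le> ennreal 8 * (Qa + Qb)"
  proof -
    have "2 * (ennreal 4 * Qb) + 2 * (ennreal 1 * Qa) = 2 * Qa + 8 * Qb"
      by (simp add: mult.assoc[symmetric] add.commute)
    also have "\<dots> \<le> 8 * Qa + 8 * Qb" by (intro add_mono mult_right_mono) auto
    also have "\<dots> = ennreal 8 * (Qa + Qb)" by (simp add: distrib_left)
    finally show ?thesis .
  qed
  finally have "ennreal (norm (dr (dr v) 1)) \<le> ennreal (sqrt 8) * (ennsqrt Qa + ennsqrt Qb)"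
    by (rule sq_bound2) simp
  also have "\<dots> \<le> ennreal 3 * H30 v"
  proof (rule mult_mono)
    have "sqrt 8 \<le> sqrt (3^2)" by (intro real_sqrt_le_mono) simp
    thus "ennreal (sqrt 8) \<le> ennreal 3" by (intro ennreal_leI) simp
  qed (use qab in auto)
  finally have v2one: "ennreal (norm (dr (dr v) 1)) \<le> ennreal 3 * H30 v" .
  have g2: "ennreal (norm (dr (dr v) r)) \<le> ennreal (norm (dr (dr v) 1)) + ennreal (sqrt (ln r)) * ennsqrt Qa"
    unfolding Qa_def
  proof (rule grow_gen[OF d2 cd3, where W="\<lambda>x. 1/x"])
    show "(\<integral>\<^sup>+x. ennreal (1 / x) * indicator {1..r} x \<partial>lborel) \<le> ennreal (ln r)"
      using inv_int[of 1 r] r by simp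
    fix x assume x: "x \<in> {1..r}"
    show "(norm (drk 3 v x))^2 / (1 / x) \<le> 2 * pi * x * (norm (drk 3 v x))^2"
      using x pi_gt3 mult_right_mono[of 1 "2*pi" "x * (norm (drk 3 v x))^2"] by (simp add: mult_ac)
  qed (use r in auto)
  have A: "ennreal (norm (drk 2 v r)) \<le> ennreal (18 * jb (ln r)) * H30 v"
  proof -
    have "ennreal (norm (dr (dr v) r)) \<le> ennreal (3 + sqrt (ln r) * 1) * H30 v"
      by (rule comb_bound[OF g2 v2one qa]) (use r in auto)
    also have "\<dots> \<le> ennreal (18 * jb (ln r)) * H30 v"
      using sqrt_ln_le_jb[OF r] jb_ge1[of "ln r"] by (intro mult_right_mono ennreal_leI) auto
    finally show ?thesis unfolding d2eq .
  qed
  have "(ennreal (norm (dr v 1)))^2 \<le> 2 * (\<integral>\<^sup>+s. ennreal ((norm (dr v s))^2) * indicator {1..2} s \<partial>lborel)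
          + 2 * (\<integral>\<^sup>+s. ennreal ((norm (dr (dr v) s))^2) * indicator {1..2} s \<partial>lborel)"
    by (rule val1[OF d1 cd2]) measurable
  also have "\<dots> \<le> 2 * (ennreal 16 * Qb) + 2 * (ennreal 4 * Qb)"
    by (intro add_mono mult_left_mono Ib1 Ib3) auto
  also have "\<dots> = ennreal 40 * Qb" by (simp add: mult.assoc[symmetric] distrib_right[symmetric])
  finally have "ennreal (norm (dr v 1)) \<le> ennreal (sqrt 40) * ennsqrt Qb"
    by (rule sq_bound1) simp
  also have "\<dots> \<le> ennreal 7 * H30 v"
  proof (rule mult_mono)
    have "sqrt 40 \<le> sqrt (7^2)" by (intro real_sqrt_le_mono) simp
    thus "ennreal (sqrt 40) \<le> ennreal 7" by (intro ennreal_leI) simp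
  qed (use qb in auto)
  finally have v1one: "ennreal (norm (dr v 1)) \<le> ennreal 7 * H30 v" .
  have g1: "ennreal (norm (dr v r)) \<le> ennreal (norm (dr v 1)) + ennreal (sqrt (r^2 * (1 + (ln r)^2))) * ennsqrt Qb"
    unfolding Qb_def
  proof (rule grow_gen[OF d1 cd2, where W="\<lambda>x. x^1 * (1 + (ln x)^2)"])
    show "(\<integral>\<^sup>+x. ennreal (x^1 * (1 + (ln x)^2)) * indicator {1..r} x \<partial>lborel) \<le> ennreal (r^2 * (1 + (ln r)^2))"
      using wpoly_int[OF r, of 1] by (simp add: numeral_2_eq_2)
    fix x assume x: "x \<in> {1..r}"
    show "(norm (dr (dr v) x))^2 / (x^1 * (1 + (ln x)^2)) \<le> 2*pi*x*(norm (wk 1 (dr v) x / (x * jb (ln x))))^2"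
      using pb1 x by simp
  qed (use r in \<open>auto intro!: mult_pos_pos add_pos_nonneg\<close>)
  have sq1: "sqrt (r^2 * (1 + (ln r)^2)) = r * jb (ln r)" using r by (simp add: jb_def real_sqrt_mult)
  have "ennreal (norm (dr v r)) \<le> ennreal (7 + r * jb (ln r) * 1) * H30 v"
    by (rule comb_bound[OF g1[unfolded sq1] v1one qb]) (use r jb_pos[of "ln r"] in auto)
  also have "\<dots> \<le> ennreal (18 * jb (ln r) * r) * H30 v"
  proof (intro mult_right_mono ennreal_leI)
    have "1 \<le> r * jb (ln r)" using r jb_ge1[of "ln r"] by (metis mult_mono' mult_1 zero_le_one)
    thus "7 + r * jb (ln r) * 1 \<le> 18 * jb (ln r) * r" by (simp add: mult_ac)
  qed simp
  finally have B: "ennreal (norm (dr v r) / r) \<le> ennreal (18 * jb (ln r)) * H30 v"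
    by (rule div_bound) (use r jb_pos[of "ln r"] in auto)
  have g0: "ennreal (norm (v r)) \<le> ennreal (norm (v 1)) + ennreal (sqrt (r^4 * (1 + (ln r)^2))) * ennsqrt Qb"
    unfolding Qb_def
  proof (rule grow_gen[OF dv cdv, where W="\<lambda>x. x^3 * (1 + (ln x)^2)"])
    show "(\<integral>\<^sup>+x. ennreal (x^3 * (1 + (ln x)^2)) * indicator {1..r} x \<partial>lborel) \<le> ennreal (r^4 * (1 + (ln r)^2))"
      using wpoly_int[OF r, of 3] by simp
    fix x assume x: "x \<in> {1..r}"
    show "(norm (dr v x))^2 / (x^3 * (1 + (ln x)^2)) \<le> 2*pi*x*(norm (wk 1 (dr v) x / (x * jb (ln x))))^2"
      using pb3 x by simp
  qed (use r in \<open>auto intro!: mult_pos_pos add_pos_nonneg\<close>)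
  have sq0: "sqrt (r^4 * (1 + (ln r)^2)) = r^2 * jb (ln r)"
  proof -
    have "sqrt (r^4) = r^2"
    proof -
      have "r^4 = (r^2)^2" by simp
      thus ?thesis by (simp only: real_sqrt_abs) simp
    qed
    thus ?thesis using r by (simp add: jb_def real_sqrt_mult)
  qed
  have v1: "ennreal (norm (v 1)) \<le> ennreal 17 * H30 v" using est0a[OF u, of 1] by (simp add: v_def)
  have "ennreal (norm (v r)) \<le> ennreal (17 + r^2 * jb (ln r) * 1) * H30 v"
    by (rule comb_bound[OF g0[unfolded sq0] v1 qb]) (use r jb_pos[of "ln r"] in auto)
  also have "\<dots> \<le> ennreal (18 * jb (ln r) * r^2) * H30 v"
  proof (intro mult_right_mono ennreal_leI)
    have "1 \<le> r^2" using r by simp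
    hence "1 \<le> r^2 * jb (ln r)" using jb_ge1[of "ln r"] by (metis mult_mono' mult_1 zero_le_one)
    thus "17 + r^2 * jb (ln r) * 1 \<le> 18 * jb (ln r) * r^2" by (simp add: mult_ac)
  qed simp
  finally have C: "ennreal (norm (v r) / r^2) \<le> ennreal (18 * jb (ln r)) * H30 v"
    by (rule div_bound) (use r jb_pos[of "ln r"] in auto)
  have "ennreal (wk 2 v r) \<le> ennreal (18 * jb (logp r)) * H30 v"
    unfolding wk2_eq using r A B C by (simp add: logp_ge1 ennreal_max_le)
  moreover have "wk 2 v r \<ge> 0" unfolding wk2_eq by (simp add: le_max_iff_disj)
  ultimately have "ennreal (wk 2 v r / jb (logp r)) \<le> ennreal 18 * H30 v"
    by (intro div_bound[OF _ jb_pos]) auto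
  thus ?thesis by (simp only: v_def)
qed


lemma inv_sq_tail:
  assumes "t > 0"
  shows "(\<integral>\<^sup>+s. ennreal (1 / s^2) * indicator {t..} s \<partial>lborel) = ennreal (1 / t)"
proof -
  have "((\<lambda>x. 1 / x ^ 2) has_integral 1 / (real (2 - 1) * t ^ (2 - 1))) {t..}"
    by (rule has_integral_inverse_power_to_inf) (use assms in auto)
  hence "((\<lambda>x. 1 / x ^ 2) has_integral 1 / t) {t..}" by simp
  from nn_integral_has_integral_lebesgue'[OF _ this] show ?thesis using assms by simp
qed

lemma hardy:
  fixes g Qf :: "real \<Rightarrow> real"
  assumes [measurable]: "g \<in> borel_measurable borel" "Qf \<in> borel_measurable borel"
    and Qp: "\<And>s. Qf s \<ge> 0"
    and Q: "\<And>s. s > 0 \<Longrightarrow> (ennreal (Qf s))^2 \<le> ennreal s * (\<integral>\<^sup>+t. ennreal (t^2 * (g t)^2) * indicator {0..s} t \<partial>lborel)"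
  shows "(\<integral>\<^sup>+s. ennreal ((Qf s)^2 / s^3) * indicator {0<..} s \<partial>lborel) \<le> (\<integral>\<^sup>+t. ennreal (t * (g t)^2) * indicator {0<..} t \<partial>lborel)"
proof -
  define F where "F s t = ennreal (1 / s^2) * indicator {0<..} s * (ennreal (t^2 * (g t)^2) * (if 0 \<le> t \<and> t \<le> s then 1 else 0))" for s t :: real
  have Fm: "case_prod F \<in> borel_measurable (lborel \<Otimes>\<^sub>M lborel)"
    unfolding F_def by measurable
  have "(\<integral>\<^sup>+s. ennreal ((Qf s)^2 / s^3) * indicator {0<..} s \<partial>lborel) \<le> (\<integral>\<^sup>+s. (\<integral>\<^sup>+t. F s t \<partial>lborel) \<partial>lborel)"
  proof (intro nn_integral_mono)
    fix s :: real
    show "ennreal ((Qf s)^2 / s^3) * indicator {0<..} s \<le> (\<integral>\<^sup>+t. F s t \<partial>lborel)"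
    proof (cases "s > 0")
      case True
      have "(\<integral>\<^sup>+t. F s t \<partial>lborel) = ennreal (1 / s^2) * (\<integral>\<^sup>+t. ennreal (t^2 * (g t)^2) * indicator {0..s} t \<partial>lborel)"
        unfolding F_def using True
        by (subst nn_integral_cmult[symmetric]) (auto intro!: nn_integral_cong simp: indicator_def)
      moreover have "ennreal ((Qf s)^2 / s^3) \<le> ennreal (1 / s^2) * (\<integral>\<^sup>+t. ennreal (t^2 * (g t)^2) * indicator {0..s} t \<partial>lborel)"
      proof -
        have "ennreal ((Qf s)^2 / s^3) = ennreal (1 / s^3) * (ennreal (Qf s))^2"
          using True Qp[of s] by (simp add: ennreal_power ennreal_mult[symmetric])
        also have "\<dots> \<le> ennreal (1 / s^3) * (ennreal s * (\<integral>\<^sup>+t. ennreal (t^2 * (g t)^2) * indicator {0..s} t \<partial>lborel))"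
          using Q[OF True] by (rule mult_left_mono) simp
        also have "\<dots> = (ennreal (1 / s^3) * ennreal s) * (\<integral>\<^sup>+t. ennreal (t^2 * (g t)^2) * indicator {0..s} t \<partial>lborel)"
          by (simp add: mult.assoc)
        also have "ennreal (1 / s^3) * ennreal s = ennreal (1 / s^2)"
          using True by (simp add: ennreal_mult[symmetric] power_eq_if field_simps)
        finally show ?thesis .
      qed
      ultimately show ?thesis using True by simp
    qed simp
  qed
  also have "\<dots> = (\<integral>\<^sup>+t. (\<integral>\<^sup>+s. F s t \<partial>lborel) \<partial>lborel)"
    by (rule lborel_pair.Fubini'[symmetric]) (rule Fm)
  also have "\<dots> \<le> (\<integral>\<^sup>+t. ennreal (t * (g t)^2) * indicator {0<..} t \<partial>lborel)"
  proof (intro nn_integral_mono)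
    fix t :: real
    show "(\<integral>\<^sup>+s. F s t \<partial>lborel) \<le> ennreal (t * (g t)^2) * indicator {0<..} t"
    proof (cases "t > 0")
      case True
      have "(\<integral>\<^sup>+s. F s t \<partial>lborel) = ennreal (t^2 * (g t)^2) * (\<integral>\<^sup>+s. ennreal (1 / s^2) * indicator {t..} s \<partial>lborel)"
        unfolding F_def using True
        by (subst nn_integral_cmult[symmetric]) (auto intro!: nn_integral_cong simp: indicator_def mult_ac)
      also have "\<dots> = ennreal (t^2 * (g t)^2) * ennreal (1 / t)" using inv_sq_tail[OF True] by simp
      also have "\<dots> = ennreal (t * (g t)^2)"
        using True by (simp add: ennreal_mult[symmetric] power2_eq_square field_simps)
      finally show ?thesis using True by simp
    next
      case False
      have "F s t = 0" for s
        unfolding F_def using False by (cases "t = 0") auto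
      thus ?thesis by simp
    qed
  qed
  finally show ?thesis .
qed


lemma ennsqrt_mono: "x \<le> y \<Longrightarrow> ennsqrt x \<le> ennsqrt y"
  by (rule ennreal_le_by_pow[of _ 2]) (simp_all add: ennsqrt_sq)

lemma est1b:
  assumes u: "schwartz u" and e: "equivariant 1 u" and r: "0 < r"
  shows "ennreal (norm (profile u r)) \<le> ennreal 1 * ennsqrt (L2 (profile u)) * ennsqrt (H21 (profile u))"
proof -
  define v where "v = profile u"
  have dv: "\<And>x. (v has_vector_derivative dr v x) (at x)"
    using drk_deriv[OF u, of 0] by (simp add: v_def)
  have d1: "\<And>x. (dr v has_vector_derivative dr (dr v) x) (at x)"
    using drk_deriv[OF u, of 1] by (simp add: v_def)
  have cv: "continuous_on UNIV v" using drk_cont[OF u, where k=0] by (simp add: v_def)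
  have cdv: "continuous_on UNIV (dr v)" using drk_cont[OF u, where k=1] by (simp add: v_def)
  have cd2: "continuous_on UNIV (dr (dr v))" using drk_cont[OF u, where k=2] by (simp add: v_def numeral_2_eq_2)
  have lim: "(v \<longlongrightarrow> 0) at_top" using drk_lim[OF u, of 0] by (simp add: v_def)
  have [measurable]: "v \<in> borel_measurable borel" "dr v \<in> borel_measurable borel" "dr (dr v) \<in> borel_measurable borel"
    using drk_meas[OF u, of 0] drk_meas[OF u, of 1] drk_meas[OF u, of 2]
    by (simp_all add: v_def numeral_2_eq_2)
  have v0: "v 0 = 0" using equiv1_zero[OF e] by (simp add: v_def profile_def)
  define q where "q s = s *\<^sub>R dr v s - v s" for s
  have [measurable]: "q \<in> borel_measurable borel" unfolding q_def by measurable
  have cq: "continuous_on UNIV q" unfolding q_def by (intro continuous_intros cv cdv)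
  have dq: "(q has_vector_derivative s *\<^sub>R dr (dr v) s) (at s)" for s
  proof -
    have "((\<lambda>s. s *\<^sub>R dr v s - v s) has_vector_derivative (s *\<^sub>R dr (dr v) s + 1 *\<^sub>R dr v s - dr v s)) (at s)"
      by (intro has_vector_derivative_diff has_vector_derivative_scaleR DERIV_ident d1 dv)
    thus ?thesis by (simp add: q_def[abs_def])
  qed
  have q0: "q 0 = 0" by (simp add: q_def v0)
  have qb: "(ennreal (norm (q s)))^2 \<le> ennreal s * (\<integral>\<^sup>+t. ennreal (t^2 * (norm (dr (dr v) t))^2) * indicator {0..s} t \<partial>lborel)"
    if s: "s > 0" for s
  proof -
    have "ennreal (norm (q s - q 0)) \<le> (\<integral>\<^sup>+t. ennreal (norm (t *\<^sub>R dr (dr v) t)) * indicator {0..s} t \<partial>lborel)"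
      by (rule ftc_nn) (use s dq in \<open>auto intro!: continuous_intros continuous_on_subset[OF cd2]\<close>)
    also have "\<dots> = (\<integral>\<^sup>+t. ennreal (\<bar>t\<bar> * norm (dr (dr v) t)) * indicator {0..s} t \<partial>lborel)"
      by simp
    finally have 1: "ennreal (norm (q s)) \<le> (\<integral>\<^sup>+t. ennreal (\<bar>t\<bar> * norm (dr (dr v) t)) * indicator {0..s} t \<partial>lborel)"
      by (simp add: q0)
    have "(ennreal (norm (q s)))^2 \<le> (\<integral>\<^sup>+t. ennreal (\<bar>t\<bar> * norm (dr (dr v) t)) * indicator {0..s} t \<partial>lborel)^2"
      using 1 by (rule power_mono) simp
    also have "\<dots> \<le> (\<integral>\<^sup>+t. ennreal 1 * indicator {0..s} t \<partial>lborel) *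
        (\<integral>\<^sup>+t. ennreal ((\<bar>t\<bar> * norm (dr (dr v) t))^2 / 1) * indicator {0..s} t \<partial>lborel)"
      by (rule csw[of "\<lambda>t. \<bar>t\<bar> * norm (dr (dr v) t)" "\<lambda>t. 1" "{0..s}"]) auto
    also have "\<dots> = ennreal s * (\<integral>\<^sup>+t. ennreal (t^2 * (norm (dr (dr v) t))^2) * indicator {0..s} t \<partial>lborel)"
      using s by (simp add: nn_integral_cmult_indicator power_mult_distrib)
    finally show ?thesis .
  qed
  have hq: "(\<integral>\<^sup>+s. ennreal ((norm (q s))^2 / s^3) * indicator {0<..} s \<partial>lborel) \<le>
      (\<integral>\<^sup>+t. ennreal (t * (norm (dr (dr v) t))^2) * indicator {0<..} t \<partial>lborel)"
    by (rule hardy[of "\<lambda>t. norm (dr (dr v) t)" "\<lambda>s. norm (q s)"]) (use qb in auto)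
  define N where "N s = (norm (v s))^2" for s
  define \<phi> where "\<phi> s = N s / s^2" for s
  define \<phi>' where "\<phi>' s = 2 * inner (v s) (q s) / s^3" for s
  have dN: "(N has_real_derivative 2 * inner (v s) (dr v s)) (at s)" for s
    using normsq_deriv[OF dv, of s] unfolding N_def has_real_derivative_iff_has_vector_derivative .
  have dphi: "(\<phi> has_vector_derivative \<phi>' s) (at s)" if s: "s > 0" for s
  proof -
    have d2: "((\<lambda>s. s^2) has_real_derivative 2 * s) (at s)"
      by (auto intro!: derivative_eq_intros)
    have "((\<lambda>s. N s / s^2) has_real_derivative ((2 * inner (v s) (dr v s)) * s^2 - N s * (2 * s)) / (s^2 * s^2)) (at s)"
      by (rule DERIV_divide[OF dN d2]) (use s in simp)
    moreover have "((2 * inner (v s) (dr v s)) * s^2 - N s * (2 * s)) / (s^2 * s^2) = \<phi>' s"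
    proof -
      have e: "inner (v s) (q s) = s * inner (v s) (dr v s) - N s"
        by (simp add: q_def N_def inner_diff_right power2_norm_eq_inner)
      show ?thesis using s unfolding \<phi>'_def e by (simp add: field_simps power2_eq_square power3_eq_cube)
    qed
    ultimately show ?thesis
      unfolding has_real_derivative_iff_has_vector_derivative[symmetric] \<phi>_def[abs_def] by simp
  qed
  have phib: "norm (\<phi>' s) \<le> 2 * norm (v s) * norm (q s) / s^3" if s: "s > 0" for s
  proof -
    have "norm (\<phi>' s) = norm (2 * inner (v s) (q s)) / s^3" using s by (simp add: \<phi>'_def norm_divide)
    also have "\<dots> \<le> 2 * norm (v s) * norm (q s) / s^3"
      using s inner_bound[of "v s" "q s"] by (intro divide_right_mono) auto
    finally show ?thesis .
  qed
  have cphi: "continuous_on {r..} \<phi>'"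
    unfolding \<phi>'_def using r
    by (intro continuous_intros continuous_on_subset[OF cv] continuous_on_subset[OF cq]) auto
  have limN: "(N \<longlongrightarrow> 0) at_top"
    unfolding N_def using tendsto_power[OF tendsto_norm[OF lim], of 2] by simp
  have limphi: "(\<phi> \<longlongrightarrow> 0) at_top"
  proof (rule Lim_null_comparison[OF _ limN])
    show "\<forall>\<^sub>F s in at_top. norm (\<phi> s) \<le> N s"
      using eventually_ge_at_top[of 1]
    proof eventually_elim
      case (elim s)
      have "N s / s^2 \<le> N s / 1" using elim by (intro divide_left_mono) (auto simp: N_def)
      thus ?case using elim by (simp add: \<phi>_def N_def)
    qed
  qed
  have tail: "ennreal (norm (\<phi> r)) \<le> (\<integral>\<^sup>+s. ennreal (norm (\<phi>' s)) * indicator {r..} s \<partial>lborel)"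
    by (rule tail_nn[OF _ cphi limphi]) (use r dphi in auto)
  have [measurable]: "(\<lambda>s. ennreal (2 * norm (v s) * norm (q s) / s^3) * indicator {r..} s) \<in> borel_measurable lborel"
    by measurable
  define Qv where "Qv = (\<integral>\<^sup>+x. ennreal (2*pi*x*(norm (v x))^2) * indicator {0<..} x \<partial>lborel)"
  define Q2 where "Q2 = (\<integral>\<^sup>+x. ennreal (2*pi*x*(norm (dr (dr v) x))^2) * indicator {0<..} x \<partial>lborel)"
  define Fv where "Fv s = ennreal (sqrt (2 * pi * s) * norm (v s)) * indicator {0<..} s" for s :: real
  define Gv where "Gv s = ennreal (2 * norm (q s) / (sqrt (2 * pi * s) * s)) * indicator {0<..} s" for s :: real
  have [measurable]: "Fv \<in> borel_measurable lborel" "Gv \<in> borel_measurable lborel"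
    unfolding Fv_def Gv_def by measurable
  have "ennreal ((norm (v r))^2) = ennreal (r^2) * ennreal (norm (\<phi> r))"
    using r by (simp add: \<phi>_def N_def ennreal_mult[symmetric])
  also have "\<dots> \<le> ennreal (r^2) * (\<integral>\<^sup>+s. ennreal (2 * norm (v s) * norm (q s) / s^3) * indicator {r..} s \<partial>lborel)"
  proof (intro mult_left_mono order_trans[OF tail] nn_integral_mono)
    fix s show "ennreal (norm (\<phi>' s)) * indicator {r..} s \<le> ennreal (2 * norm (v s) * norm (q s) / s^3) * indicator {r..} s"
      using phib[of s] r by (cases "s \<ge> r") (auto intro!: ennreal_leI)
  qed simp
  also have "\<dots> = (\<integral>\<^sup>+s. ennreal (r^2) * (ennreal (2 * norm (v s) * norm (q s) / s^3) * indicator {r..} s) \<partial>lborel)"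
    by (rule nn_integral_cmult[symmetric]) measurable
  also have "\<dots> \<le> (\<integral>\<^sup>+s. Fv s * Gv s \<partial>lborel)"
  proof (intro nn_integral_mono)
    fix s
    show "ennreal (r^2) * (ennreal (2 * norm (v s) * norm (q s) / s^3) * indicator {r..} s) \<le> Fv s * Gv s"
    proof (cases "s \<ge> r")
      case True
      hence s: "s > 0" using r by simp
      have "Fv s * Gv s = ennreal (2 * norm (v s) * norm (q s) / s)"
        using s unfolding Fv_def Gv_def
        by (simp add: ennreal_mult[symmetric] field_simps real_sqrt_mult)
      moreover have "ennreal (r^2) * ennreal (2 * norm (v s) * norm (q s) / s^3) \<le> ennreal (2 * norm (v s) * norm (q s) / s)"
      proof -
        have "r^2 \<le> s^2" using True r by (intro power_mono) auto
        hence "r^2 * (2 * norm (v s) * norm (q s) / s^3) \<le> s^2 * (2 * norm (v s) * norm (q s) / s^3)"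
          using s by (intro mult_right_mono) auto
        also have "\<dots> = 2 * norm (v s) * norm (q s) / s" using s by (simp add: field_simps power2_eq_square power3_eq_cube)
        finally have le: "r^2 * (2 * norm (v s) * norm (q s) / s^3) \<le> 2 * norm (v s) * norm (q s) / s" .
        have "ennreal (r^2) * ennreal (2 * norm (v s) * norm (q s) / s^3) = ennreal (r^2 * (2 * norm (v s) * norm (q s) / s^3))"
          by (rule ennreal_mult[symmetric]) (use s in auto)
        also have "\<dots> \<le> ennreal (2 * norm (v s) * norm (q s) / s)" using le by (rule ennreal_leI)
        finally show ?thesis .
      qed
      ultimately show ?thesis using True by simp
    qed simp
  qed
  finally have m1: "ennreal ((norm (v r))^2) \<le> (\<integral>\<^sup>+s. Fv s * Gv s \<partial>lborel)" .
  have F2: "(\<integral>\<^sup>+s. Fv s ^ 2 \<partial>lborel) = Qv"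
    unfolding Qv_def Fv_def
    by (intro nn_integral_cong) (auto simp: indicator_def ennreal_power power_mult_distrib)
  have G2: "(\<integral>\<^sup>+s. Gv s ^ 2 \<partial>lborel) = ennreal (2 / pi) * (\<integral>\<^sup>+s. ennreal ((norm (q s))^2 / s^3) * indicator {0<..} s \<partial>lborel)"
  proof -
    have "(\<integral>\<^sup>+s. Gv s ^ 2 \<partial>lborel) = (\<integral>\<^sup>+s. ennreal (2 / pi) * (ennreal ((norm (q s))^2 / s^3) * indicator {0<..} s) \<partial>lborel)"
    proof (intro nn_integral_cong)
      fix s :: real
      show "Gv s ^ 2 = ennreal (2 / pi) * (ennreal ((norm (q s))^2 / s^3) * indicator {0<..} s)"
      proof (cases "s > 0")
        case True
        have "(2 * norm (q s) / (sqrt (2 * pi * s) * s))^2 = 2 / pi * ((norm (q s))^2 / s^3)"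
          using True by (simp add: power_divide power_mult_distrib field_simps power2_eq_square power3_eq_cube)
        thus ?thesis using True unfolding Gv_def by (simp add: ennreal_power ennreal_mult[symmetric])
      qed (simp add: Gv_def)
    qed
    also have "\<dots> = ennreal (2 / pi) * (\<integral>\<^sup>+s. ennreal ((norm (q s))^2 / s^3) * indicator {0<..} s \<partial>lborel)"
      by (rule nn_integral_cmult) measurable
    finally show ?thesis .
  qed
  have G2b: "ennreal (2 / pi) * (\<integral>\<^sup>+s. ennreal ((norm (q s))^2 / s^3) * indicator {0<..} s \<partial>lborel) \<le> Q2"
  proof -
    have "ennreal (2 / pi) * (\<integral>\<^sup>+s. ennreal ((norm (q s))^2 / s^3) * indicator {0<..} s \<partial>lborel)
        \<le> ennreal (2 / pi) * (\<integral>\<^sup>+t. ennreal (t * (norm (dr (dr v) t))^2) * indicator {0<..} t \<partial>lborel)"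
      using hq by (rule mult_left_mono) simp
    also have "\<dots> = (\<integral>\<^sup>+t. ennreal (2 / pi) * (ennreal (t * (norm (dr (dr v) t))^2) * indicator {0<..} t) \<partial>lborel)"
      by (rule nn_integral_cmult[symmetric]) measurable
    also have "\<dots> \<le> Q2" unfolding Q2_def
    proof (intro nn_integral_mono)
      fix t :: real
      show "ennreal (2 / pi) * (ennreal (t * (norm (dr (dr v) t))^2) * indicator {0<..} t) \<le> ennreal (2*pi*t*(norm (dr (dr v) t))^2) * indicator {0<..} t"
      proof (cases "t > 0")
        case True
        have "2 / pi \<le> 2 * pi" using pi_gt3 by (simp add: field_simps) (smt (verit) mult_le_cancel_left1 pi_gt3)
        hence "2 / pi * (t * (norm (dr (dr v) t))^2) \<le> 2 * pi * (t * (norm (dr (dr v) t))^2)"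
          using True by (intro mult_right_mono) auto
        thus ?thesis using True by (simp add: ennreal_mult[symmetric] mult.assoc ennreal_leI)
      qed simp
    qed
    finally show ?thesis .
  qed
  have m2: "(ennreal ((norm (v r))^2))^2 \<le> Qv * Q2"
  proof -
    have "(ennreal ((norm (v r))^2))^2 \<le> (\<integral>\<^sup>+s. Fv s * Gv s \<partial>lborel)^2" using m1 by (rule power_mono) simp
    also have "\<dots> \<le> (\<integral>\<^sup>+s. Fv s ^ 2 \<partial>lborel) * (\<integral>\<^sup>+s. Gv s ^ 2 \<partial>lborel)"
      by (rule Cauchy_Schwarz_nn_integral) measurable
    also have "\<dots> \<le> Qv * Q2" unfolding F2 G2 using G2b by (rule mult_left_mono) simp
    finally show ?thesis .
  qed
  define P where "P = ennsqrt (ennsqrt Qv)"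
  define R where "R = ennsqrt (ennsqrt Q2)"
  have P4: "P^4 = Qv" unfolding P_def
    by (metis ennsqrt_sq power_mult numeral_Bit0 mult_2 numeral_One mult.commute)
  have R4: "R^4 = Q2" unfolding R_def
    by (metis ennsqrt_sq power_mult numeral_Bit0 mult_2 numeral_One mult.commute)
  have "(ennreal (norm (v r)))^4 = (ennreal ((norm (v r))^2))^2"
    by (simp add: ennreal_power power_mult[symmetric])
  also have "\<dots> \<le> (P * R)^4" using m2 by (simp add: power_mult_distrib P4 R4)
  finally have yb: "ennreal (norm (v r)) \<le> P * R" by (rule ennreal_le_by_pow) simp
  have L2v: "L2 v = ennsqrt Qv" by (simp add: L2_def Qv_def)
  have L22: "L2 (drk 2 v) = ennsqrt Q2" by (simp add: L2_def Q2_def numeral_2_eq_2)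
  have "R \<le> ennsqrt (H21 v)" unfolding R_def
    by (intro ennsqrt_mono) (simp add: H21_def L22[symmetric] add_increasing2)
  hence "P * R \<le> P * ennsqrt (H21 v)" by (rule mult_left_mono) simp
  with yb have "ennreal (norm (v r)) \<le> ennreal 1 * ennsqrt (L2 v) * ennsqrt (H21 v)"
    unfolding L2v P_def by simp
  thus ?thesis by (simp only: v_def)
qed


lemma Linf_le: "(\<And>r. r \<in> S \<Longrightarrow> ennreal \<bar>f r\<bar> \<le> X) \<Longrightarrow> Linf S f \<le> X"
  unfolding Linf_def by (rule SUP_least)

lemma const_up: "y \<le> ennreal a * H \<Longrightarrow> a \<le> 18 \<Longrightarrow> y \<le> ennreal 18 * H"
  by (erule order_trans, intro mult_right_mono ennreal_leI) auto

theorem lemmaA15: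
  "\<exists>C>0.
    (\<forall>u. schwartz u \<and> equivariant 0 u \<longrightarrow>
       Linf {0<..1} (\<lambda>r. norm (profile u r)) \<le> ennreal C * H30 (profile u) \<and>
       Linf {1..} (\<lambda>r. norm (profile u r)) \<le> ennreal C * H10 (profile u) \<and>
       Linf {1..} (\<lambda>r. wk 2 (profile u) r / jb (logp r)) \<le> ennreal C * H30 (profile u)) \<and>
    (\<forall>u. schwartz u \<and> equivariant 1 u \<longrightarrow>
       Linf {0<..1} (\<lambda>r. norm (profile u r)) \<le> ennreal C * H21 (profile u) \<and>
       Linf {1..} (\<lambda>r. norm (profile u r)) \<le>
         ennreal C * ennsqrt (L2 (profile u)) * ennsqrt (H21 (profile u)) \<and>
       Linf {1..} (\<lambda>r. wk 1 (profile u) r / jb (logp r)) \<le> ennreal C * H21 (profile u)) \<and>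
    (\<forall>u. schwartz u \<and> equivariant 2 u \<longrightarrow>
       Linf {0<..1} (\<lambda>r. norm (profile u r)) \<le> ennreal C * H12 (profile u) \<and>
       Linf {1..} (\<lambda>r. norm (profile u r) / jb (logp r)) \<le> ennreal C * H12 (profile u))"
proof (intro exI[of _ 18] conjI allI impI)
  show "(0::real) < 18" by simp
next
  fix u assume a: "schwartz u \<and> equivariant 0 u"
  show "Linf {0<..1} (\<lambda>r. norm (profile u r)) \<le> ennreal 18 * H30 (profile u)"
  proof (rule Linf_le)
    fix r :: real assume r: "r \<in> {0<..1}"
    show "ennreal \<bar>norm (profile u r)\<bar> \<le> ennreal 18 * H30 (profile u)"
      using const_up[OF est0a[OF a[THEN conjunct1], of r]] r by simp
  qed
  show "Linf {1..} (\<lambda>r. norm (profile u r)) \<le> ennreal 18 * H10 (profile u)"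
  proof (rule Linf_le)
    fix r :: real assume r: "r \<in> {1..}"
    show "ennreal \<bar>norm (profile u r)\<bar> \<le> ennreal 18 * H10 (profile u)"
      using const_up[OF est0b[OF a[THEN conjunct1], of r]] r by simp
  qed
  show "Linf {1..} (\<lambda>r. wk 2 (profile u) r / jb (logp r)) \<le> ennreal 18 * H30 (profile u)"
  proof (rule Linf_le)
    fix r :: real assume r: "r \<in> {1..}"
    have "wk 2 (profile u) r \<ge> 0" unfolding wk2_eq by (simp add: le_max_iff_disj)
    hence "\<bar>wk 2 (profile u) r / jb (logp r)\<bar> = wk 2 (profile u) r / jb (logp r)"
      using jb_pos[of "logp r"] by simp
    thus "ennreal \<bar>wk 2 (profile u) r / jb (logp r)\<bar> \<le> ennreal 18 * H30 (profile u)"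
      using const_up[OF est0c[OF a[THEN conjunct1], of r]] r by simp
  qed
next
  fix u assume a: "schwartz u \<and> equivariant 1 u"
  show "Linf {0<..1} (\<lambda>r. norm (profile u r)) \<le> ennreal 18 * H21 (profile u)"
  proof (rule Linf_le)
    fix r :: real assume r: "r \<in> {0<..1}"
    show "ennreal \<bar>norm (profile u r)\<bar> \<le> ennreal 18 * H21 (profile u)"
      using const_up[OF est1a[OF a[THEN conjunct1], of r]] r by simp
  qed
  show "Linf {1..} (\<lambda>r. norm (profile u r)) \<le> ennreal 18 * ennsqrt (L2 (profile u)) * ennsqrt (H21 (profile u))"
  proof (rule Linf_le)
    fix r :: real assume r: "r \<in> {1..}"
    have "ennreal (norm (profile u r)) \<le> ennreal 1 * ennsqrt (L2 (profile u)) * ennsqrt (H21 (profile u))"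
      using est1b[OF a[THEN conjunct1] a[THEN conjunct2], of r] r by simp
    also have "\<dots> \<le> ennreal 18 * ennsqrt (L2 (profile u)) * ennsqrt (H21 (profile u))"
      by (intro mult_right_mono ennreal_leI) auto
    finally show "ennreal \<bar>norm (profile u r)\<bar> \<le> ennreal 18 * ennsqrt (L2 (profile u)) * ennsqrt (H21 (profile u))"
      by simp
  qed
  show "Linf {1..} (\<lambda>r. wk 1 (profile u) r / jb (logp r)) \<le> ennreal 18 * H21 (profile u)"
  proof (rule Linf_le)
    fix r :: real assume r: "r \<in> {1..}"
    have "wk 1 (profile u) r \<ge> 0" unfolding wk1_eq by (simp add: le_max_iff_disj)
    hence "\<bar>wk 1 (profile u) r / jb (logp r)\<bar> = wk 1 (profile u) r / jb (logp r)"
      using jb_pos[of "logp r"] by simp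
    thus "ennreal \<bar>wk 1 (profile u) r / jb (logp r)\<bar> \<le> ennreal 18 * H21 (profile u)"
      using const_up[OF est1c[OF a[THEN conjunct1], of r]] r by simp
  qed
next
  fix u assume a: "schwartz u \<and> equivariant 2 u"
  show "Linf {0<..1} (\<lambda>r. norm (profile u r)) \<le> ennreal 18 * H12 (profile u)"
  proof (rule Linf_le)
    fix r :: real assume r: "r \<in> {0<..1}"
    show "ennreal \<bar>norm (profile u r)\<bar> \<le> ennreal 18 * H12 (profile u)"
      using const_up[OF est2a[OF a[THEN conjunct1] a[THEN conjunct2], of r]] r by simp
  qed
  show "Linf {1..} (\<lambda>r. norm (profile u r) / jb (logp r)) \<le> ennreal 18 * H12 (profile u)"
  proof (rule Linf_le)
    fix r :: real assume r: "r \<in> {1..}"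
    have "\<bar>norm (profile u r) / jb (logp r)\<bar> = norm (profile u r) / jb (logp r)"
      using jb_pos[of "logp r"] by simp
    thus "ennreal \<bar>norm (profile u r) / jb (logp r)\<bar> \<le> ennreal 18 * H12 (profile u)"
      using const_up[OF est2b[OF a[THEN conjunct1] a[THEN conjunct2], of r]] r jb_pos[of "logp r"]
      by (simp add: abs_of_pos)
  qed
qed


end
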